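(* Let $i \in \mathbb{N}_0$. (i) Suppose that the mesh $\mathcal{T}_h$ satisfies the angle condition $\int_\Omega \nabla\varphi_{z}\cdot\nabla\varphi_{z'} \leq 0$ for all vertices $z \neq z'$. The approximations generated by the tangent plane scheme satisfy the discrete energy law \[ \mathcal{J}_h(\boldsymbol{m}_h^{i+1},\boldsymbol{v}_h^{i+1}) + \alpha k \|\boldsymbol{v}_h^{i+1}\|_h^2 + \frac{\tau k^2}{2} \|d_t \boldsymbol{v}_h^{i+1}\|_h^2 + \frac{k^2}{2} \|\nabla\boldsymbol{v}_h^{i+1}\|_{\boldsymbol{L}^2(\Omega)}^2 \leq \mathcal{J}_h(\boldsymbol{m}_h^i,\boldsymbol{v}_h^i). \] (ii) The approximations generated by the nonlinear angular momentum method satisfy the discrete energy law \[ \mathcal{J}_h(\boldsymbol{m}_h^{i+1},\boldsymbol{w}_h^{i+1}) + \alpha k \|d_t\boldsymbol{m}_h^{i+1}\|_h^2 = \mathcal{J}_h(\boldsymbol{m}_h^i,\boldsymbol{w}_h^i). \] (iii) The approximations generated by the linearized angular momentum method satisfy the discrete energy law \[ \mathcal{J}_h(\boldsymbol{m}_h^{i+1},\boldsymbol{w}_h^{i+1}) + \alpha k \|d_t\boldsymbol{m}_h^{i+1}\|_h^2 + k \big(\boldsymbol{m}_h^{i+1/2} \times \boldsymbol{r}_h^i, \mathcal{P}_h\boldsymbol{h}_{\mathrm{eff}}[\boldsymbol{m}_h^{i+1/2}] - \alpha \, d_t\boldsymbol{m}_h^{i+1}\big)_h = \mathcal{J}_h(\boldsymbol{m}_h^i,\boldsymbol{w}_h^i).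 \]
   Context: Setting: $\Omega\subset\mathbb{R}^d$ ($d=2,3$) is a bounded polytopal Lipschitz domain; $\alpha>0$, $\tau>0$ are constants (Gilbert damping and angular momentum relaxation time) of the inertial Landau–Lifshitz–Gilbert equation $\partial_t\boldsymbol{m} = -\boldsymbol{m}\times(\boldsymbol{h}_{\mathrm{eff}}[\boldsymbol{m}] - \alpha\partial_t\boldsymbol{m} - \tau\partial_{tt}\boldsymbol{m})$. The energy is $\mathcal{E}[\boldsymbol{m}] = \frac12\|\nabla\boldsymbol{m}\|_{\boldsymbol{L}^2(\Omega)}^2$ and the effective field is defined by $-\langle\boldsymbol{h}_{\mathrm{eff}}[\boldsymbol{m}],\boldsymbol{\phi}\rangle = (\nabla\boldsymbol{m},\nabla\boldsymbol{\phi})$ (an element of the dual of $\boldsymbol{H}^1(\Omega)$). Discretization: $k>0$ is a uniform time-step, $d_t\phi^{i+1} := (\phi^{i+1}-\phi^i)/k$, $\phi^{i+1/2} := (\phi^{i+1}+\phi^i)/2$. $\mathcal{T}_h$ is a shape-regular simplicial mesh of $\Omega$ with vertex set $\mathcal{N}_h$, $\mathcal{S}^1(\mathcal{T}_h)$ the space of continuous piecewise affine functions with nodal hat basis $\{\varphi_z\}_{z\in\mathcal{N}_h}$, $\mathcal{I}_h$ the (vector-valued) nodal interpolant. The mass-lumped product is $(\boldsymbol{\psi},\boldsymbol{\phi})_h = \int_\Omega \mathcal{I}_h[\boldsymbol{\psi}\cdot\boldsymbol{\phi}]$ with induced norm $\|\cdot\|_h$. The map $\mathcal{P}_h$ from the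 dual of $\boldsymbol{H}^1(\Omega)$ to $\mathcal{S}^1(\mathcal{T}_h)^3$ is defined by $(\mathcal{P}_h\boldsymbol{u},\boldsymbol{\phi}_h)_h = \langle\boldsymbol{u},\boldsymbol{\phi}_h\rangle$ for all $\boldsymbol{\phi}_h\in\mathcal{S}^1(\mathcal{T}_h)^3$. Let $\mathcal{M}_h := \{\boldsymbol{\phi}_h\in\mathcal{S}^1(\mathcal{T}_h)^3 : |\boldsymbol{\phi}_h(z)|=1 \ \forall z\in\mathcal{N}_h\}$ and, for $\boldsymbol{\psi}_h\in\mathcal{S}^1(\mathcal{T}_h)^3$, $\mathcal{K}_h[\boldsymbol{\psi}_h] := \{\boldsymbol{\phi}_h\in\mathcal{S}^1(\mathcal{T}_h)^3 : \boldsymbol{\psi}_h(z)\cdot\boldsymbol{\phi}_h(z)=0 \ \forall z\in\mathcal{N}_h\}$. The discrete total energy is $\mathcal{J}_h(\boldsymbol{m}_h,\boldsymbol{u}_h) = \mathcal{E}[\boldsymbol{m}_h] + \frac{\tau}{2}\|\boldsymbol{u}_h\|_h^2$. All algorithms start from $\boldsymbol{m}_h^0\in\mathcal{M}_h$, $\boldsymbol{v}_h^0\in\mathcal{K}_h[\boldsymbol{m}_h^0]$. Tangent plane scheme: for each $i$, compute $\boldsymbol{v}_h^{i+1}\in\mathcal{K}_h[\boldsymbol{m}_h^i]$ such that for all $\boldsymbol{\phi}_h\in\mathcal{K}_h[\boldsymbol{m}_h^i]$: $\tau(d_t\boldsymbol{v}_h^{i+1},\boldsymbol{\phi}_h)_h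 + \alpha(\boldsymbol{v}_h^{i+1},\boldsymbol{\phi}_h)_h + (\boldsymbol{m}_h^i\times\boldsymbol{v}_h^{i+1},\boldsymbol{\phi}_h)_h - k(\mathcal{P}_h\boldsymbol{h}_{\mathrm{eff}}[\boldsymbol{v}_h^{i+1}],\boldsymbol{\phi}_h)_h = (\mathcal{P}_h\boldsymbol{h}_{\mathrm{eff}}[\boldsymbol{m}_h^i],\boldsymbol{\phi}_h)_h$; then set $\boldsymbol{m}_h^{i+1} = \mathcal{I}_h[(\boldsymbol{m}_h^i + k\boldsymbol{v}_h^{i+1})/|\boldsymbol{m}_h^i + k\boldsymbol{v}_h^{i+1}|]$. Nonlinear angular momentum method: set $\boldsymbol{w}_h^0 = \mathcal{I}_h[\boldsymbol{m}_h^0\times\boldsymbol{v}_h^0]$; for each $i$, find $(\boldsymbol{m}_h^{i+1},\boldsymbol{w}_h^{i+1})\in\mathcal{M}_h\times\mathcal{K}_h[\boldsymbol{m}_h^{i+1}]$ such that for all $\boldsymbol{\phi}_h,\boldsymbol{\psi}_h\in\mathcal{S}^1(\mathcal{T}_h)^3$: $(d_t\boldsymbol{m}_h^{i+1},\boldsymbol{\phi}_h)_h = -(\boldsymbol{m}_h^{i+1/2}\times\boldsymbol{w}_h^{i+1/2},\boldsymbol{\phi}_h)_h$ and $\tau(d_t\boldsymbol{w}_h^{i+1},\boldsymbol{\psi}_h)_h = (\boldsymbol{m}_h^{i+1/2}\times\mathcal{P}_h\boldsymbol{h}_{\mathrm{eff}}[\boldsymbol{m}_h^{i+1/2}],\boldsymbol{\psi}_h)_h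 - \alpha(\boldsymbol{m}_h^{i+1/2}\times d_t\boldsymbol{m}_h^{i+1},\boldsymbol{\psi}_h)_h - (\boldsymbol{m}_h^{i+1/2}\times\boldsymbol{w}_h^{i+1/2},\boldsymbol{\psi}_h)_h$. Linearized angular momentum method: same initialization of $\boldsymbol{w}_h^0$; for each $i$, set $\boldsymbol{u}_h^{i,0}=\boldsymbol{m}_h^i$, $\boldsymbol{z}_h^{i,0}=\boldsymbol{w}_h^i$ and for $\ell\in\mathbb{N}_0$ compute $\boldsymbol{u}_h^{i,\ell+1}\in\mathcal{S}^1(\mathcal{T}_h)^3$ with $2(\boldsymbol{u}_h^{i,\ell+1},\boldsymbol{\phi}_h)_h + k(\boldsymbol{u}_h^{i,\ell+1}\times\boldsymbol{z}_h^{i,\ell},\boldsymbol{\phi}_h)_h = 2(\boldsymbol{m}_h^i,\boldsymbol{\phi}_h)_h$ for all $\boldsymbol{\phi}_h$, then $\boldsymbol{z}_h^{i,\ell+1}\in\mathcal{S}^1(\mathcal{T}_h)^3$ with $2\tau(\boldsymbol{z}_h^{i,\ell+1},\boldsymbol{\psi}_h)_h + k(\boldsymbol{u}_h^{i,\ell+1}\times\boldsymbol{z}_h^{i,\ell+1},\boldsymbol{\psi}_h)_h = k(\boldsymbol{u}_h^{i,\ell+1}\times\mathcal{P}_h\boldsymbol{h}_{\mathrm{eff}}[\boldsymbol{u}_h^{i,\ell+1}],\boldsymbol{\psi}_h)_h + 2\alpha(\boldsymbol{u}_h^{i,\ell+1}\times\boldsymbol{m}_h^i,\boldsymbol{\psi}_h)_h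 + 2\tau(\boldsymbol{w}_h^i,\boldsymbol{\psi}_h)_h$ for all $\boldsymbol{\psi}_h$, until $\|\boldsymbol{u}_h^{i,\ell+1}-\boldsymbol{u}_h^{i,\ell}\|_h + \|\boldsymbol{z}_h^{i,\ell+1}-\boldsymbol{z}_h^{i,\ell}\|_h\le\varepsilon$; with $\ell_i$ the first index meeting this, set $\boldsymbol{m}_h^{i+1} = 2\boldsymbol{u}_h^{i,\ell_i+1}-\boldsymbol{m}_h^i$, $\boldsymbol{w}_h^{i+1} = 2\boldsymbol{z}_h^{i,\ell_i+1}-\boldsymbol{w}_h^i$, and $\boldsymbol{r}_h^i := \boldsymbol{z}_h^{i,\ell_i+1}-\boldsymbol{z}_h^{i,\ell_i}$ (so $\|\boldsymbol{r}_h^i\|_h\le\varepsilon$). *)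

theory Defs
  imports "HOL-Analysis.Analysis" "HOL-Analysis.Cross3"
begin

definition lipschitz_domain :: "(real^'d) set \<Rightarrow> bool" where
  "lipschitz_domain \<Omega> \<longleftrightarrow> open \<Omega> \<and> bounded \<Omega> \<and> connected \<Omega> \<and>
     (\<forall>x\<in>frontier \<Omega>. \<exists>r>0. \<exists>(e::real^'d) (g::real^'d \<Rightarrow> real) (L::real).
        norm e = 1 \<and> (\<forall>y t. g (y + t *\<^sub>R e) = g y) \<and>
        (\<forall>y y'. \<bar>g y - g y'\<bar> \<le> L * norm (y - y')) \<and>
        ball x r \<inter> \<Omega> = {y \<in> ball x r. y \<bullet> e < g y})"

definition polytopal :: "(real^'d) set \<Rightarrow> bool" where
  "polytopal \<Omega> \<longleftrightarrow> (\<exists>P. finite P \<and> (\<forall>p\<in>P. polytope p) \<and> closure \<Omega> = \<Union>P)"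

text \<open>A conforming simplicial mesh, each element given by its set of d+1 affinely
independent vertices; the element itself is the convex hull.\<close>
definition simplicial_mesh :: "(real^'d) set \<Rightarrow> (real^'d) set set \<Rightarrow> bool" where
  "simplicial_mesh \<Omega> Tv \<longleftrightarrow> finite Tv \<and>
     (\<forall>V\<in>Tv. finite V \<and> card V = CARD('d) + 1 \<and> \<not> affine_dependent V) \<and>
     \<Union>((\<lambda>V. convex hull V) ` Tv) = closure \<Omega> \<and>
     (\<forall>V\<in>Tv. \<forall>W\<in>Tv. convex hull V \<inter> convex hull W = convex hull (V \<inter> W))"

definition nodes :: "(real^'d) set set \<Rightarrow> (real^'d) set" where
  "nodes Tv = \<Union>Tv"

definition S1 :: "(real^'d) set \<Rightarrow> (real^'d) set set \<Rightarrow> (real^'d \<Rightarrow> 'b::real_normed_vector) set" where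
  "S1 \<Omega> Tv = {f. continuous_on (closure \<Omega>) f \<and>
      (\<forall>V\<in>Tv. \<exists>A b. linear A \<and> (\<forall>x\<in>convex hull V. f x = A x + b)) \<and>
      (\<forall>x. x \<notin> closure \<Omega> \<longrightarrow> f x = 0)}"

definition hat :: "(real^'d) set \<Rightarrow> (real^'d) set set \<Rightarrow> real^'d \<Rightarrow> (real^'d \<Rightarrow> real)" where
  "hat \<Omega> Tv z = (THE \<phi>. \<phi> \<in> S1 \<Omega> Tv \<and>
      (\<forall>z'\<in>nodes Tv. \<phi> z' = (if z' = z then 1 else 0)))"

definition interp :: "(real^'d) set \<Rightarrow> (real^'d) set set \<Rightarrow> (real^'d \<Rightarrow> 'b::real_vector) \<Rightarrow> (real^'d \<Rightarrow> 'b)" where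
  "interp \<Omega> Tv g = (\<lambda>x. \<Sum>z\<in>nodes Tv. hat \<Omega> Tv z x *\<^sub>R g z)"

definition lprod :: "(real^'d) set \<Rightarrow> (real^'d) set set \<Rightarrow> (real^'d \<Rightarrow> 'b::real_inner) \<Rightarrow> (real^'d \<Rightarrow> 'b) \<Rightarrow> real" where
  "lprod \<Omega> Tv \<psi> \<phi> = integral \<Omega> (interp \<Omega> Tv (\<lambda>x. \<psi> x \<bullet> \<phi> x))"

definition hnorm :: "(real^'d) set \<Rightarrow> (real^'d) set set \<Rightarrow> (real^'d \<Rightarrow> 'b::real_inner) \<Rightarrow> real" where
  "hnorm \<Omega> Tv \<psi> = sqrt (lprod \<Omega> Tv \<psi> \<psi>)"

definition dprod :: "(real^'d) set \<Rightarrow> (real^'d \<Rightarrow> 'b::real_inner) \<Rightarrow> (real^'d \<Rightarrow> 'b) \<Rightarrow> real" where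
  "dprod \<Omega> u v = integral \<Omega> (\<lambda>x. \<Sum>j\<in>Basis.
      frechet_derivative u (at x) j \<bullet> frechet_derivative v (at x) j)"

definition energy :: "(real^'d) set \<Rightarrow> (real^'d \<Rightarrow> real^3) \<Rightarrow> real" where
  "energy \<Omega> m = dprod \<Omega> m m / 2"

definition Ph_heff :: "(real^'d) set \<Rightarrow> (real^'d) set set \<Rightarrow> (real^'d \<Rightarrow> real^3) \<Rightarrow> (real^'d \<Rightarrow> real^3)" where
  "Ph_heff \<Omega> Tv m = (THE p. p \<in> S1 \<Omega> Tv \<and>
      (\<forall>\<phi>\<in>S1 \<Omega> Tv. lprod \<Omega> Tv p \<phi> = - dprod \<Omega> m \<phi>))"

definition Jh :: "(real^'d) set \<Rightarrow> (real^'d) set set \<Rightarrow> real \<Rightarrow> (real^'d \<Rightarrow> real^3) \<Rightarrow> (real^'d \<Rightarrow> real^3) \<Rightarrow> real" where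
  "Jh \<Omega> Tv \<tau> m u = energy \<Omega> m + \<tau> / 2 * (hnorm \<Omega> Tv u)\<^sup>2"

definition Mh :: "(real^'d) set \<Rightarrow> (real^'d) set set \<Rightarrow> (real^'d \<Rightarrow> real^3) set" where
  "Mh \<Omega> Tv = {\<phi> \<in> S1 \<Omega> Tv. \<forall>z\<in>nodes Tv. norm (\<phi> z) = 1}"

definition Kh :: "(real^'d) set \<Rightarrow> (real^'d) set set \<Rightarrow> (real^'d \<Rightarrow> real^3) \<Rightarrow> (real^'d \<Rightarrow> real^3) set" where
  "Kh \<Omega> Tv \<psi> = {\<phi> \<in> S1 \<Omega> Tv. \<forall>z\<in>nodes Tv. \<psi> z \<bullet> \<phi> z = 0}"

definition dt :: "real \<Rightarrow> (real^'d \<Rightarrow> real^3) \<Rightarrow> (real^'d \<Rightarrow> real^3) \<Rightarrow> (real^'d \<Rightarrow> real^3)" where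
  "dt k new old = (\<lambda>x. (1 / k) *\<^sub>R (new x - old x))"

definition mid :: "(real^'d \<Rightarrow> real^3) \<Rightarrow> (real^'d \<Rightarrow> real^3) \<Rightarrow> (real^'d \<Rightarrow> real^3)" where
  "mid new old = (\<lambda>x. (1 / 2) *\<^sub>R (new x + old x))"

definition fcross :: "(real^'d \<Rightarrow> real^3) \<Rightarrow> (real^'d \<Rightarrow> real^3) \<Rightarrow> (real^'d \<Rightarrow> real^3)" where
  "fcross f g = (\<lambda>x. cross3 (f x) (g x))"

definition tangent_plane_scheme ::
  "(real^'d) set \<Rightarrow> (real^'d) set set \<Rightarrow> real \<Rightarrow> real \<Rightarrow> real \<Rightarrow> nat \<Rightarrow>
   (nat \<Rightarrow> real^'d \<Rightarrow> real^3) \<Rightarrow> (nat \<Rightarrow> real^'d \<Rightarrow> real^3) \<Rightarrow> bool" where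
  "tangent_plane_scheme \<Omega> Tv \<alpha> \<tau> k n m v \<longleftrightarrow>
     m 0 \<in> Mh \<Omega> Tv \<and> v 0 \<in> Kh \<Omega> Tv (m 0) \<and>
     (\<forall>i<n. v (Suc i) \<in> Kh \<Omega> Tv (m i) \<and>
        (\<forall>\<phi>\<in>Kh \<Omega> Tv (m i).
            \<tau> * lprod \<Omega> Tv (dt k (v (Suc i)) (v i)) \<phi> + \<alpha> * lprod \<Omega> Tv (v (Suc i)) \<phi>
          + lprod \<Omega> Tv (fcross (m i) (v (Suc i))) \<phi>
          - k * lprod \<Omega> Tv (Ph_heff \<Omega> Tv (v (Suc i))) \<phi>
          = lprod \<Omega> Tv (Ph_heff \<Omega> Tv (m i)) \<phi>) \<and>
        m (Suc i) = interp \<Omega> Tv (\<lambda>x. (1 / norm (m i x + k *\<^sub>R v (Suc i) x)) *\<^sub>R (m i x + k *\<^sub>R v (Suc i) x)))"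

definition nonlinear_am_method ::
  "(real^'d) set \<Rightarrow> (real^'d) set set \<Rightarrow> real \<Rightarrow> real \<Rightarrow> real \<Rightarrow> nat \<Rightarrow>
   (real^'d \<Rightarrow> real^3) \<Rightarrow> (nat \<Rightarrow> real^'d \<Rightarrow> real^3) \<Rightarrow> (nat \<Rightarrow> real^'d \<Rightarrow> real^3) \<Rightarrow> bool" where
  "nonlinear_am_method \<Omega> Tv \<alpha> \<tau> k n v0 m w \<longleftrightarrow>
     m 0 \<in> Mh \<Omega> Tv \<and> v0 \<in> Kh \<Omega> Tv (m 0) \<and> w 0 = interp \<Omega> Tv (fcross (m 0) v0) \<and>
     (\<forall>i<n. m (Suc i) \<in> Mh \<Omega> Tv \<and> w (Suc i) \<in> Kh \<Omega> Tv (m (Suc i)) \<and>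
        (\<forall>\<phi>\<in>S1 \<Omega> Tv. lprod \<Omega> Tv (dt k (m (Suc i)) (m i)) \<phi>
            = - lprod \<Omega> Tv (fcross (mid (m (Suc i)) (m i)) (mid (w (Suc i)) (w i))) \<phi>) \<and>
        (\<forall>\<psi>\<in>S1 \<Omega> Tv. \<tau> * lprod \<Omega> Tv (dt k (w (Suc i)) (w i)) \<psi>
            = lprod \<Omega> Tv (fcross (mid (m (Suc i)) (m i)) (Ph_heff \<Omega> Tv (mid (m (Suc i)) (m i)))) \<psi>
              - \<alpha> * lprod \<Omega> Tv (fcross (mid (m (Suc i)) (m i)) (dt k (m (Suc i)) (m i))) \<psi>
              - lprod \<Omega> Tv (fcross (mid (m (Suc i)) (m i)) (mid (w (Suc i)) (w i))) \<psi>))"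

text \<open>Linearized method: u i l, z i l are the inner iterates, lfin i is the stopping index
l_i (first index meeting the stopping criterion).\<close>
definition linearized_am_method ::
  "(real^'d) set \<Rightarrow> (real^'d) set set \<Rightarrow> real \<Rightarrow> real \<Rightarrow> real \<Rightarrow> real \<Rightarrow> nat \<Rightarrow>
   (real^'d \<Rightarrow> real^3) \<Rightarrow> (nat \<Rightarrow> real^'d \<Rightarrow> real^3) \<Rightarrow> (nat \<Rightarrow> real^'d \<Rightarrow> real^3) \<Rightarrow>
   (nat \<Rightarrow> nat \<Rightarrow> real^'d \<Rightarrow> real^3) \<Rightarrow> (nat \<Rightarrow> nat \<Rightarrow> real^'d \<Rightarrow> real^3) \<Rightarrow> (nat \<Rightarrow> nat) \<Rightarrow> bool" where
  "linearized_am_method \<Omega> Tv \<alpha> \<tau> k \<epsilon> n v0 m w u z lfin \<longleftrightarrow>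
     m 0 \<in> Mh \<Omega> Tv \<and> v0 \<in> Kh \<Omega> Tv (m 0) \<and> w 0 = interp \<Omega> Tv (fcross (m 0) v0) \<and>
     (\<forall>i<n. u i 0 = m i \<and> z i 0 = w i \<and>
        (\<forall>l\<le>lfin i.
           u i (Suc l) \<in> S1 \<Omega> Tv \<and>
           (\<forall>\<phi>\<in>S1 \<Omega> Tv. 2 * lprod \<Omega> Tv (u i (Suc l)) \<phi>
               + k * lprod \<Omega> Tv (fcross (u i (Suc l)) (z i l)) \<phi> = 2 * lprod \<Omega> Tv (m i) \<phi>) \<and>
           z i (Suc l) \<in> S1 \<Omega> Tv \<and>
           (\<forall>\<psi>\<in>S1 \<Omega> Tv. 2 * \<tau> * lprod \<Omega> Tv (z i (Suc l)) \<psi>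
               + k * lprod \<Omega> Tv (fcross (u i (Suc l)) (z i (Suc l))) \<psi>
             = k * lprod \<Omega> Tv (fcross (u i (Suc l)) (Ph_heff \<Omega> Tv (u i (Suc l)))) \<psi>
               + 2 * \<alpha> * lprod \<Omega> Tv (fcross (u i (Suc l)) (m i)) \<psi>
               + 2 * \<tau> * lprod \<Omega> Tv (w i) \<psi>)) \<and>
        (\<forall>l<lfin i. hnorm \<Omega> Tv (\<lambda>x. u i (Suc l) x - u i l x)
                   + hnorm \<Omega> Tv (\<lambda>x. z i (Suc l) x - z i l x) > \<epsilon>) \<and>
        hnorm \<Omega> Tv (\<lambda>x. u i (Suc (lfin i)) x - u i (lfin i) x)
          + hnorm \<Omega> Tv (\<lambda>x. z i (Suc (lfin i)) x - z i (lfin i) x) \<le> \<epsilon> \<and>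
        m (Suc i) = (\<lambda>x. 2 *\<^sub>R u i (Suc (lfin i)) x - m i x) \<and>
        w (Suc i) = (\<lambda>x. 2 *\<^sub>R z i (Suc (lfin i)) x - w i x))"

definition residual :: "(nat \<Rightarrow> nat \<Rightarrow> real^'d \<Rightarrow> real^3) \<Rightarrow> (nat \<Rightarrow> nat) \<Rightarrow> nat \<Rightarrow> real^'d \<Rightarrow> real^3" where
  "residual z lfin i = (\<lambda>x. z i (Suc (lfin i)) x - z i (lfin i) x)"

end

theory Submission
  imports Defs
begin



lemma affine_convex_comb:
  fixes A :: "'a::real_vector \<Rightarrow> 'b::real_vector"
  assumes "finite V" "sum u V = 1" "linear A"
  shows "A (\<Sum>v\<in>V. u v *\<^sub>R v) + b = (\<Sum>v\<in>V. u v *\<^sub>R (A v + b))"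
proof -
  have "A (\<Sum>v\<in>V. u v *\<^sub>R v) = (\<Sum>v\<in>V. u v *\<^sub>R A v)"
    using assms(3) by (simp add: linear_sum linear_scale o_def)
  moreover have "b = (\<Sum>v\<in>V. u v) *\<^sub>R b" using assms(2) by simp
  ultimately show ?thesis
    by (simp add: scaleR_add_right sum.distrib scaleR_sum_left)
qed

lemma affine_zero_on_hull:
  fixes A :: "'a::real_vector \<Rightarrow> 'b::real_vector"
  assumes "finite V" "x \<in> convex hull V" "linear A" "\<And>v. v \<in> V \<Longrightarrow> A v + b = 0"
  shows "A x + b = 0"
proof -
  obtain u where u: "\<forall>v\<in>V. 0 \<le> u v" "sum u V = 1" "(\<Sum>v\<in>V. u v *\<^sub>R v) = x"
    using assms(2) unfolding convex_hull_finite[OF assms(1)] by blast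
  have "A x + b = (\<Sum>v\<in>V. u v *\<^sub>R (A v + b))"
    using affine_convex_comb[OF assms(1) u(2) assms(3)] u(3) by simp
  also have "\<dots> = 0" using assms(4) by simp
  finally show ?thesis .
qed

lemma affine_agree_on_hull:
  fixes A :: "'a::real_vector \<Rightarrow> 'b::real_vector"
  assumes "finite V" "x \<in> convex hull V" "linear A" "linear A'"
    "\<And>v. v \<in> V \<Longrightarrow> A v + b = A' v + b'"
  shows "A x + b = A' x + b'"
proof -
  have l: "linear (\<lambda>y. A y - A' y)" using assms(3,4) by (rule linear_compose_sub)
  have "(\<lambda>y. A y - A' y) x + (b - b') = 0"
    by (rule affine_zero_on_hull[OF assms(1,2) l]) (metis assms(5) add_diff_eq diff_add_eq diff_diff_eq2 diff_self)
  then show ?thesis by (simp add: algebra_simps)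
qed

lemma affine_nonneg_on_hull:
  fixes A :: "'a::real_vector \<Rightarrow> real"
  assumes "finite V" "x \<in> convex hull V" "linear A" "\<And>v. v \<in> V \<Longrightarrow> A v + b \<ge> 0"
  shows "A x + b \<ge> 0"
proof -
  obtain u where u: "\<forall>v\<in>V. 0 \<le> u v" "sum u V = 1" "(\<Sum>v\<in>V. u v *\<^sub>R v) = x"
    using assms(2) unfolding convex_hull_finite[OF assms(1)] by blast
  have "A x + b = (\<Sum>v\<in>V. u v *\<^sub>R (A v + b))"
    using affine_convex_comb[OF assms(1) u(2) assms(3)] u(3) by simp
  also have "\<dots> \<ge> 0" using assms(4) u(1) by (auto intro!: sum_nonneg)
  finally show ?thesis .
qed

lemma bary_exists:
  fixes V :: "'a::euclidean_space set"
  assumes "finite V" "\<not> affine_dependent V"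
  shows "\<exists>A b. linear A \<and> (\<forall>v\<in>V. A v + b = (if v = z then 1 else (0::real)))"
proof (cases "V = {}")
  case True
  then show ?thesis by (auto intro: linear_zero)
next
  case False
  then obtain v0 where v0: "v0 \<in> V" by blast
  define S where "S = V - {v0}"
  have V: "V = insert v0 S" and nv: "v0 \<notin> S" using v0 by (auto simp: S_def)
  have "\<not> dependent ((\<lambda>x. -v0 + x) ` S)"
    using assms(2) affine_dependent_iff_dependent[OF nv] V by simp
  from linear_independent_extend[OF this, of "\<lambda>y. (if y + v0 = z then 1 else 0) - (if v0 = z then 1 else (0::real))"]
  obtain g where g: "linear g"
    "\<forall>y\<in>(\<lambda>x. -v0 + x) ` S. g y = (if y + v0 = z then 1 else 0) - (if v0 = z then 1 else (0::real))"
    by blast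
  show ?thesis
  proof (intro exI conjI ballI)
    show "linear g" by fact
    fix v assume "v \<in> V"
    show "g v + ((if v0 = z then 1 else 0) - g v0) = (if v = z then 1 else 0)"
    proof (cases "v = v0")
      case True then show ?thesis by simp
    next
      case False
      then have "v \<in> S" using \<open>v \<in> V\<close> by (auto simp: S_def)
      then have "g (-v0 + v) = (if (-v0 + v) + v0 = z then 1 else 0) - (if v0 = z then 1 else (0::real))"
        using g(2) by blast
      then have "g (-v0 + v) = (if v = z then 1 else 0) - (if v0 = z then 1 else (0::real))"
        by simp
      moreover have "g (-v0 + v) = g v - g v0"
        using g(1) by (simp add: linear_diff)
      ultimately show ?thesis by simp
    qed
  qed
qed




lemma linear_scaleR_fun: "linear (A::'a::real_vector \<Rightarrow> real) \<Longrightarrow> linear (\<lambda>x. A x *\<^sub>R (c::'b::real_vector))"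
  unfolding linear_iff by (simp add: linear_add linear_scale scaleR_add_left)

lemma linear_cscale: "linear (A::'a::real_vector \<Rightarrow> 'b::real_vector) \<Longrightarrow> linear (\<lambda>x. c *\<^sub>R A x)"
  unfolding linear_iff by (simp add: linear_add linear_scale scaleR_add_right)

lemma S1_0: "(\<lambda>x. 0) \<in> S1 \<Omega> Tv"
  unfolding S1_def by (auto intro!: exI[of _ "\<lambda>x. 0"] linear_zero)

lemma S1D:
  assumes "f \<in> S1 \<Omega> Tv"
  shows "continuous_on (closure \<Omega>) f" "\<And>V. V \<in> Tv \<Longrightarrow> \<exists>A b. linear A \<and> (\<forall>x\<in>convex hull V. f x = A x + b)"
    "\<And>x. x \<notin> closure \<Omega> \<Longrightarrow> f x = 0"
  using assms unfolding S1_def by auto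

lemma S1I:
  assumes "continuous_on (closure \<Omega>) f" "\<And>V. V \<in> Tv \<Longrightarrow> \<exists>A b. linear A \<and> (\<forall>x\<in>convex hull V. f x = A x + b)"
    "\<And>x. x \<notin> closure \<Omega> \<Longrightarrow> f x = 0"
  shows "f \<in> S1 \<Omega> Tv"
  using assms unfolding S1_def by auto

lemma S1_add: assumes f: "f \<in> S1 \<Omega> Tv" and g: "g \<in> S1 \<Omega> Tv" shows "(\<lambda>x. f x + g x) \<in> S1 \<Omega> Tv"
proof (rule S1I)
  show "continuous_on (closure \<Omega>) (\<lambda>x. f x + g x)" using S1D(1)[OF f] S1D(1)[OF g] by (intro continuous_intros)
  fix V assume V: "V \<in> Tv"
  obtain A b where A: "linear A" "\<forall>x\<in>convex hull V. f x = A x + b" using S1D(2)[OF f V] by blast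
  obtain A' b' where A': "linear A'" "\<forall>x\<in>convex hull V. g x = A' x + b'" using S1D(2)[OF g V] by blast
  show "\<exists>A b. linear A \<and> (\<forall>x\<in>convex hull V. f x + g x = A x + b)"
    using A A' by (intro exI[of _ "\<lambda>x. A x + A' x"] exI[of _ "b + b'"]) (auto intro: linear_compose_add)
qed (use S1D(3)[OF f] S1D(3)[OF g] in auto)

lemma S1_scale: assumes f: "f \<in> S1 \<Omega> Tv" shows "(\<lambda>x. c *\<^sub>R f x) \<in> S1 \<Omega> Tv"
proof (rule S1I)
  show "continuous_on (closure \<Omega>) (\<lambda>x. c *\<^sub>R f x)" using S1D(1)[OF f] by (intro continuous_intros)
  fix V assume V: "V \<in> Tv"
  obtain A b where A: "linear A" "\<forall>x\<in>convex hull V. f x = A x + b" using S1D(2)[OF f V] by blast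
  show "\<exists>A b. linear A \<and> (\<forall>x\<in>convex hull V. c *\<^sub>R f x = A x + b)"
    using A by (intro exI[of _ "\<lambda>x. c *\<^sub>R A x"] exI[of _ "c *\<^sub>R b"]) (auto simp: scaleR_add_right intro: linear_cscale)
qed (use S1D(3)[OF f] in auto)

lemma S1_scaleR_fun: assumes f: "(\<phi>::_\<Rightarrow>real) \<in> S1 \<Omega> Tv" shows "(\<lambda>x. \<phi> x *\<^sub>R (c::'b::real_normed_vector)) \<in> S1 \<Omega> Tv"
proof (rule S1I)
  show "continuous_on (closure \<Omega>) (\<lambda>x. \<phi> x *\<^sub>R c)" using S1D(1)[OF f] by (intro continuous_intros)
  fix V assume V: "V \<in> Tv"
  obtain A b where A: "linear A" "\<forall>x\<in>convex hull V. \<phi> x = A x + b" using S1D(2)[OF f V] by blast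
  show "\<exists>A b. linear A \<and> (\<forall>x\<in>convex hull V. \<phi> x *\<^sub>R c = A x + b)"
    using A by (intro exI[of _ "\<lambda>x. A x *\<^sub>R c"] exI[of _ "b *\<^sub>R c"]) (auto intro: linear_scaleR_fun simp: scaleR_add_left)
qed (use S1D(3)[OF f] in auto)

lemma S1_diff: "f \<in> S1 \<Omega> Tv \<Longrightarrow> g \<in> S1 \<Omega> Tv \<Longrightarrow> (\<lambda>x. f x - g x) \<in> S1 \<Omega> Tv"
  using S1_add[of f \<Omega> Tv "\<lambda>x. (-1) *\<^sub>R g x"] S1_scale[of g \<Omega> Tv "-1"] by simp

lemma S1_sum: "finite I \<Longrightarrow> (\<And>i. i \<in> I \<Longrightarrow> f i \<in> S1 \<Omega> Tv) \<Longrightarrow> (\<lambda>x. \<Sum>i\<in>I. f i x) \<in> S1 \<Omega> Tv"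
  by (induction I rule: finite_induct) (auto intro: S1_0 S1_add)

locale fem =
  fixes \<Omega> :: "(real^'d) set" and Tv :: "(real^'d) set set"
  assumes mesh: "simplicial_mesh \<Omega> Tv" and opn: "open \<Omega>" and bdd: "bounded \<Omega>"
begin

abbreviation "N \<equiv> nodes Tv"

lemma finTv: "finite Tv" and finV: "V \<in> Tv \<Longrightarrow> finite V"
  and cardV: "V \<in> Tv \<Longrightarrow> card V = CARD('d) + 1"
  and indV: "V \<in> Tv \<Longrightarrow> \<not> affine_dependent V"
  and cover: "\<Union>((\<lambda>V. convex hull V) ` Tv) = closure \<Omega>"
  and conf: "V \<in> Tv \<Longrightarrow> W \<in> Tv \<Longrightarrow> convex hull V \<inter> convex hull W = convex hull (V \<inter> W)"
  using mesh unfolding simplicial_mesh_def by auto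

lemma finN: "finite N" using finTv finV by (auto simp: nodes_def)

lemma VN: "V \<in> Tv \<Longrightarrow> V \<subseteq> N" by (auto simp: nodes_def)

lemma closedhull: "V \<in> Tv \<Longrightarrow> closed (convex hull V)"
  by (simp add: compact_imp_closed finV finite_imp_compact_convex_hull)

lemma in_cover: "x \<in> closure \<Omega> \<Longrightarrow> \<exists>V\<in>Tv. x \<in> convex hull V"
  using cover by blast

lemma hull_sub: "V \<in> Tv \<Longrightarrow> convex hull V \<subseteq> closure \<Omega>"
  using cover by blast

definition lb :: "(real^'d) set \<Rightarrow> real^'d \<Rightarrow> ((real^'d \<Rightarrow> real) \<times> real)" where
  "lb V z = (SOME p. linear (fst p) \<and> (\<forall>v\<in>V. fst p v + snd p = (if v = z then 1 else 0)))"

definition hv where "hv V z x = fst (lb V z) x + snd (lb V z)"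

lemma lb: "V \<in> Tv \<Longrightarrow> linear (fst (lb V z)) \<and> (\<forall>v\<in>V. fst (lb V z) v + snd (lb V z) = (if v = z then 1 else 0))"
proof -
  assume V: "V \<in> Tv"
  obtain A :: "real^'d \<Rightarrow> real" and b :: real where "linear A" "\<forall>v\<in>V. A v + b = (if v = z then 1 else 0)"
    using bary_exists[OF finV[OF V] indV[OF V], of z] by blast
  then have "\<exists>p::(real^'d \<Rightarrow> real) \<times> real. linear (fst p) \<and> (\<forall>v\<in>V. fst p v + snd p = (if v = z then 1 else 0))"
    by (intro exI[of _ "(A, b)"]) simp
  then show ?thesis unfolding lb_def by (rule someI_ex)
qed

lemma hv_vert: "V \<in> Tv \<Longrightarrow> v \<in> V \<Longrightarrow> hv V z v = (if v = z then 1 else 0)"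
  using lb unfolding hv_def by blast

lemma hv_agree:
  assumes "V \<in> Tv" "W \<in> Tv" "x \<in> convex hull V" "x \<in> convex hull W"
  shows "hv V z x = hv W z x"
proof -
  have x: "x \<in> convex hull (V \<inter> W)" using conf[OF assms(1,2)] assms(3,4) by blast
  have fi: "finite (V \<inter> W)" using finV[OF assms(1)] by simp
  show ?thesis unfolding hv_def
  proof (rule affine_agree_on_hull[OF fi x])
    show "linear (fst (lb V z))" using lb[OF assms(1)] by blast
    show "linear (fst (lb W z))" using lb[OF assms(2)] by blast
    fix v assume v: "v \<in> V \<inter> W"
    show "fst (lb V z) v + snd (lb V z) = fst (lb W z) v + snd (lb W z)"
      using hv_vert[OF assms(1), of v z] hv_vert[OF assms(2), of v z] v unfolding hv_def by simp
  qed
qed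

definition hatg where
  "hatg z x = (if x \<in> closure \<Omega> then hv (SOME V. V \<in> Tv \<and> x \<in> convex hull V) z x else 0)"

lemma hatg_on: assumes "V \<in> Tv" "x \<in> convex hull V" shows "hatg z x = hv V z x"
proof -
  have x: "x \<in> closure \<Omega>" using assms hull_sub by blast
  have "(SOME V. V \<in> Tv \<and> x \<in> convex hull V) \<in> Tv \<and> x \<in> convex hull (SOME V. V \<in> Tv \<and> x \<in> convex hull V)"
    by (rule someI[of _ V]) (use assms in auto)
  then have "hv (SOME V. V \<in> Tv \<and> x \<in> convex hull V) z x = hv V z x"
    using hv_agree[OF _ assms(1) _ assms(2)] by blast
  then show ?thesis unfolding hatg_def using x by simp
qed

lemma hv_cont: "V \<in> Tv \<Longrightarrow> continuous_on S (hv V z)"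
  unfolding hv_def using lb
  by (intro continuous_intros linear_continuous_on) (auto simp: linear_conv_bounded_linear)

lemma hatg_S1: "hatg z \<in> S1 \<Omega> Tv"
  unfolding S1_def
proof (intro CollectI conjI ballI allI impI)
  have "continuous_on (\<Union>V\<in>Tv. convex hull V) (hatg z)"
    by (rule continuous_on_closed_Union[OF finTv closedhull])
       (auto intro: continuous_on_eq[OF hv_cont] simp: hatg_on)
  then show "continuous_on (closure \<Omega>) (hatg z)" using cover by simp
  fix V assume "V \<in> Tv"
  then show "\<exists>A b. linear A \<and> (\<forall>x\<in>convex hull V. hatg z x = A x + b)"
    using lb hatg_on by (auto simp: hv_def)
qed (auto simp: hatg_def)

lemma hatg_node: "z' \<in> N \<Longrightarrow> hatg z z' = (if z' = z then 1 else 0)"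
proof -
  assume "z' \<in> N"
  then obtain V where "V \<in> Tv" "z' \<in> V" by (auto simp: nodes_def)
  then show ?thesis using hatg_on hv_vert hull_inc by metis
qed

lemma S1_unique:
  fixes f g :: "real^'d \<Rightarrow> 'b::real_normed_vector"
  assumes "f \<in> S1 \<Omega> Tv" "g \<in> S1 \<Omega> Tv" "\<And>z. z \<in> N \<Longrightarrow> f z = g z"
  shows "f = g"
proof
  fix x
  show "f x = g x"
  proof (cases "x \<in> closure \<Omega>")
    case True
    then obtain V where V: "V \<in> Tv" "x \<in> convex hull V" using in_cover by blast
    obtain A b where A: "linear A" "\<forall>x\<in>convex hull V. f x = A x + b" using assms(1) V unfolding S1_def by blast
    obtain A' b' where A': "linear A'" "\<forall>x\<in>convex hull V. g x = A' x + b'" using assms(2) V unfolding S1_def by blast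
    have "A x + b = A' x + b'"
      by (rule affine_agree_on_hull[OF finV[OF V(1)] V(2) A(1) A'(1)])
         (metis A(2) A'(2) assms(3) VN[OF V(1)] hull_inc subsetD)
    then show ?thesis using A A' V by simp
  next
    case False
    then show ?thesis using assms(1,2) unfolding S1_def by auto
  qed
qed

lemma hat_eq: "hat \<Omega> Tv z = hatg z"
  unfolding hat_def
  by (rule the_equality) (auto simp: hatg_S1 hatg_node intro: S1_unique[OF _ hatg_S1])

lemma hat_S1: "hat \<Omega> Tv z \<in> S1 \<Omega> Tv" by (simp add: hat_eq hatg_S1)

lemma hat_node: "z' \<in> N \<Longrightarrow> hat \<Omega> Tv z z' = (if z' = z then 1 else 0)"
  by (simp add: hat_eq hatg_node)

lemma hat_nonneg: assumes "x \<in> closure \<Omega>" shows "hat \<Omega> Tv z x \<ge> 0"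
proof -
  obtain V where V: "V \<in> Tv" "x \<in> convex hull V" using in_cover assms by blast
  have "hv V z x \<ge> 0" unfolding hv_def
    by (rule affine_nonneg_on_hull[OF finV[OF V(1)] V(2)]) (use lb[OF V(1)] in auto)
  then show ?thesis by (simp add: hat_eq hatg_on[OF V])
qed

lemma interp_S1: "interp \<Omega> Tv g \<in> S1 \<Omega> Tv"
  unfolding interp_def by (intro S1_sum finN S1_scaleR_fun hat_S1)

lemma interp_node: "z \<in> N \<Longrightarrow> interp \<Omega> Tv g z = g z"
proof -
  assume z: "z \<in> N"
  have "interp \<Omega> Tv g z = (\<Sum>z'\<in>N. (if z = z' then g z' else 0))"
    unfolding interp_def using z by (intro sum.cong) (auto simp: hat_node)
  also have "\<dots> = g z" using z finN by simp
  finally show ?thesis .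
qed

lemma S1_interp: "f \<in> S1 \<Omega> Tv \<Longrightarrow> interp \<Omega> Tv f = f"
  by (rule S1_unique[OF interp_S1]) (auto simp: interp_node)

end



context fem begin

lemma lmeas: "\<Omega> \<in> lmeasurable" by (rule lmeasurable_open[OF bdd opn])

lemma cont_integrable:
  fixes f :: "real^'d \<Rightarrow> real"
  assumes "continuous_on (closure \<Omega>) f"
  shows "f integrable_on \<Omega>"
proof -
  have cpt: "compact (closure \<Omega>)" using bdd compact_closure by auto
  have "bounded (f ` closure \<Omega>)" by (rule compact_imp_bounded[OF compact_continuous_image[OF assms cpt]])
  then obtain B where B: "\<forall>y\<in>f ` closure \<Omega>. norm y \<le> B" by (auto simp: bounded_iff)
  have sl: "\<Omega> \<in> sets lebesgue" using lmeas by (simp add: fmeasurableD)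
  show ?thesis
  proof (rule measurable_bounded_by_integrable_imp_integrable[where g="\<lambda>x. B"])
    show "f \<in> borel_measurable (lebesgue_on \<Omega>)"
      by (rule continuous_imp_measurable_on_sets_lebesgue[OF continuous_on_subset[OF assms closure_subset] sl])
    show "(\<lambda>x. B) integrable_on \<Omega>" by (rule integrable_on_const[OF lmeas])
    show "\<And>x. x \<in> \<Omega> \<Longrightarrow> norm (f x) \<le> B" using B closure_subset by auto
    show "\<Omega> \<in> sets lebesgue" by fact
  qed
qed

lemma hat_int: "hat \<Omega> Tv z integrable_on \<Omega>"
  by (rule cont_integrable[OF S1D(1)[OF hat_S1]])

definition cz where "cz z = integral \<Omega> (hat \<Omega> Tv z)"

lemma cz_nonneg: "cz z \<ge> 0"
  unfolding cz_def by (rule integral_nonneg[OF hat_int]) (use hat_nonneg closure_subset in blast)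

lemma lprod_nodal: "lprod \<Omega> Tv f g = (\<Sum>z\<in>N. cz z * (f z \<bullet> g z))"
proof -
  have e: "\<And>z. (\<lambda>x. hat \<Omega> Tv z x *\<^sub>R (f z \<bullet> g z)) = (\<lambda>x. (f z \<bullet> g z) *\<^sub>R hat \<Omega> Tv z x)"
    by (simp add: mult.commute)
  have "lprod \<Omega> Tv f g = (\<Sum>z\<in>N. integral \<Omega> (\<lambda>x. hat \<Omega> Tv z x *\<^sub>R (f z \<bullet> g z)))"
    unfolding lprod_def interp_def
    by (rule integral_sum[OF finN]) (simp add: integrable_on_mult_left hat_int)
  also have "\<dots> = (\<Sum>z\<in>N. cz z * (f z \<bullet> g z))"
    by (simp add: e cz_def mult.commute)
  finally show ?thesis .
qed

lemma lprod_nonneg: "lprod \<Omega> Tv f f \<ge> 0"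
  unfolding lprod_nodal by (intro sum_nonneg mult_nonneg_nonneg cz_nonneg) simp

lemma hnorm_sq: "(hnorm \<Omega> Tv f)\<^sup>2 = lprod \<Omega> Tv f f"
  unfolding hnorm_def using lprod_nonneg by simp

lemma S1_hasderiv:
  fixes f :: "real^'d \<Rightarrow> 'b::real_normed_vector"
  assumes f: "f \<in> S1 \<Omega> Tv" and V: "V \<in> Tv" and x: "x \<in> interior (convex hull V)"
  shows "\<exists>A. linear A \<and> (f has_derivative A) (at x)"
proof -
  obtain A b where A: "linear A" "\<forall>x\<in>convex hull V. f x = A x + b" using S1D(2)[OF f V] by blast
  have bl: "bounded_linear A" using A(1) by (simp add: linear_conv_bounded_linear)
  have "((\<lambda>y. A y + b) has_derivative A) (at x)"
    by (rule has_derivative_add_const[OF bounded_linear_imp_has_derivative[OF bl]])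
  then have "(f has_derivative A) (at x)"
  proof (rule has_derivative_transform_within_open[OF _ open_interior x])
    fix y assume "y \<in> interior (convex hull V)"
    then have "y \<in> convex hull V" using interior_subset by blast
    then show "A y + b = f y" using A(2) by simp
  qed
  then show ?thesis using A(1) by blast
qed

lemma S1_fderiv_const:
  fixes f :: "real^'d \<Rightarrow> 'b::real_normed_vector"
  assumes f: "f \<in> S1 \<Omega> Tv" and V: "V \<in> Tv" and x: "x \<in> interior (convex hull V)"
    and y: "y \<in> interior (convex hull V)"
  shows "frechet_derivative f (at x) = frechet_derivative f (at y)"
proof -
  obtain A b where A: "linear A" "\<forall>x\<in>convex hull V. f x = A x + b" using S1D(2)[OF f V] by blast
  have bl: "bounded_linear A" using A(1) by (simp add: linear_conv_bounded_linear)
  have "(f has_derivative A) (at p)" if p: "p \<in> interior (convex hull V)" for p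
  proof -
    have "((\<lambda>y. A y + b) has_derivative A) (at p)"
      by (rule has_derivative_add_const[OF bounded_linear_imp_has_derivative[OF bl]])
    then show ?thesis
    proof (rule has_derivative_transform_within_open[OF _ open_interior p])
      fix y assume "y \<in> interior (convex hull V)"
      then have "y \<in> convex hull V" using interior_subset by blast
      then show "A y + b = f y" using A(2) by simp
    qed
  qed
  then have hx: "(f has_derivative A) (at x)" and hy: "(f has_derivative A) (at y)" using x y by auto
  show ?thesis using frechet_derivative_at[OF hx] frechet_derivative_at[OF hy] by simp
qed

lemma S1_fderiv:
  fixes f :: "real^'d \<Rightarrow> 'b::real_normed_vector"
  assumes f: "f \<in> S1 \<Omega> Tv" and V: "V \<in> Tv" and x: "x \<in> interior (convex hull V)"
  shows "frechet_derivative f (at x) = (\<lambda>h. \<Sum>z\<in>N. frechet_derivative (hat \<Omega> Tv z) (at x) h *\<^sub>R f z)"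
proof -
  have d: "(hat \<Omega> Tv z has_derivative frechet_derivative (hat \<Omega> Tv z) (at x)) (at x)" for z
  proof -
    obtain A where A: "(hat \<Omega> Tv z has_derivative A) (at x)" using S1_hasderiv[OF hat_S1 V x] by blast
    show ?thesis using A frechet_derivative_at[OF A] by simp
  qed
  have "((\<lambda>y. \<Sum>z\<in>N. hat \<Omega> Tv z y *\<^sub>R f z) has_derivative
         (\<lambda>h. \<Sum>z\<in>N. frechet_derivative (hat \<Omega> Tv z) (at x) h *\<^sub>R f z)) (at x)"
    by (intro has_derivative_sum has_derivative_scaleR_left d)
  moreover have "(\<lambda>y. \<Sum>z\<in>N. hat \<Omega> Tv z y *\<^sub>R f z) = f"
    using S1_interp[OF f] unfolding interp_def by simp
  ultimately have hd: "(f has_derivative (\<lambda>h. \<Sum>z\<in>N. frechet_derivative (hat \<Omega> Tv z) (at x) h *\<^sub>R f z)) (at x)"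
    by simp
  show ?thesis using frechet_derivative_at[OF hd] by simp
qed

lemma int_disj:
  assumes V: "V \<in> Tv" and W: "W \<in> Tv" and xV: "x \<in> interior (convex hull V)"
    and xW: "x \<in> interior (convex hull W)"
  shows "V = W"
proof (rule ccontr)
  assume ne: "V \<noteq> W"
  have "V \<inter> W \<noteq> V"
  proof
    assume "V \<inter> W = V"
    then have "V \<subseteq> W" by blast
    moreover have "card V = card W" using cardV[OF V] cardV[OF W] by simp
    ultimately show False using card_subset_eq[OF finV[OF W]] ne by blast
  qed
  then have "V \<inter> W < V" by blast
  then have "card (V \<inter> W) < card V" by (rule psubset_card_mono[OF finV[OF V]])
  then have "card (V \<inter> W) \<le> DIM(real^'d)" using cardV[OF V] by simp
  then have e: "interior (convex hull (V \<inter> W)) = {}"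
    by (rule empty_interior_convex_hull[rotated]) (use finV[OF V] in simp)
  have "interior (convex hull V) \<inter> interior (convex hull W) \<subseteq> convex hull (V \<inter> W)"
    using conf[OF V W] interior_subset by blast
  then have "interior (convex hull V) \<inter> interior (convex hull W) \<subseteq> interior (convex hull (V \<inter> W))"
    by (rule interior_maximal) auto
  then show False using e xV xW by blast
qed

definition NN where "NN = (\<Union>V\<in>Tv. frontier (convex hull V))"

lemma negNN: "negligible NN"
  unfolding NN_def
  by (rule negligible_Union) (auto simp: finTv intro: negligible_convex_frontier)

lemma notNN: assumes "x \<in> closure \<Omega>" "x \<notin> NN" shows "\<exists>V\<in>Tv. x \<in> interior (convex hull V)"
proof -
  obtain V where V: "V \<in> Tv" "x \<in> convex hull V" using in_cover assms(1) by blast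
  have "closure (convex hull V) = convex hull V" using closedhull[OF V(1)] by simp
  then have "x \<in> interior (convex hull V)" using V assms(2) unfolding NN_def frontier_def by blast
  then show ?thesis using V(1) by blast
qed

lemma pc_integrable:
  fixes F :: "real^'d \<Rightarrow> real"
  assumes cst: "\<And>V x y. V \<in> Tv \<Longrightarrow> x \<in> interior (convex hull V) \<Longrightarrow> y \<in> interior (convex hull V) \<Longrightarrow> F x = F y"
  shows "F integrable_on \<Omega>"
proof -
  define c where "c V = F (SOME x. x \<in> interior (convex hull V))" for V
  have cF: "F x = c V" if "V \<in> Tv" "x \<in> interior (convex hull V)" for V x
    unfolding c_def by (rule cst[OF that]) (rule someI[of _ x], fact)
  define F' where "F' x = (\<Sum>V\<in>Tv. if x \<in> interior (convex hull V) then c V else 0)" for x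
  have "F' integrable_on \<Omega>"
    unfolding F'_def
  proof (rule integrable_sum[OF finTv])
    fix V assume V: "V \<in> Tv"
    have "interior (convex hull V) \<inter> \<Omega> \<in> lmeasurable"
      by (rule lmeasurable_open) (use bdd opn in auto)
    then have "(\<lambda>x. c V) integrable_on (interior (convex hull V) \<inter> \<Omega>)" by (rule integrable_on_const)
    then show "(\<lambda>x. if x \<in> interior (convex hull V) then c V else 0) integrable_on \<Omega>"
      by (simp add: integrable_restrict_Int)
  qed
  then show ?thesis
  proof (rule integrable_spike[OF _ negNN])
    fix x assume x: "x \<in> \<Omega> - NN"
    then obtain V where V: "V \<in> Tv" "x \<in> interior (convex hull V)" using notNN closure_subset by blast
    have "F' x = (\<Sum>W\<in>Tv. if W = V then c V else 0)"
      unfolding F'_def by (rule sum.cong) (use int_disj V in auto)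
    also have "\<dots> = c V" using V(1) finTv by simp
    finally show "F x = F' x" using cF[OF V] by simp
  qed
qed

end



context fem begin

lemma dprod_S1:
  fixes f g :: "real^'d \<Rightarrow> 'b::real_inner"
  assumes f: "f \<in> S1 \<Omega> Tv" and g: "g \<in> S1 \<Omega> Tv"
  shows "dprod \<Omega> f g = (\<Sum>z\<in>N. \<Sum>z'\<in>N. (f z \<bullet> g z') * dprod \<Omega> (hat \<Omega> Tv z) (hat \<Omega> Tv z'))"
proof -
  define D where "D z x = frechet_derivative (hat \<Omega> Tv z) (at x)" for z x
  define H where "H z z' x = (\<Sum>j\<in>Basis. D z x j * D z' x j)" for z z' x
  have dh: "dprod \<Omega> (hat \<Omega> Tv z) (hat \<Omega> Tv z') = integral \<Omega> (H z z')" for z z'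
    unfolding dprod_def H_def D_def by simp
  have Hint: "H z z' integrable_on \<Omega>" for z z'
  proof (rule pc_integrable)
    fix V x y assume V: "V \<in> Tv" and x: "x \<in> interior (convex hull V)" and y: "y \<in> interior (convex hull V)"
    show "H z z' x = H z z' y"
      unfolding H_def D_def using S1_fderiv_const[OF hat_S1 V x y] by simp
  qed
  have eq: "(\<Sum>j\<in>Basis. frechet_derivative f (at x) j \<bullet> frechet_derivative g (at x) j)
      = (\<Sum>z\<in>N. \<Sum>z'\<in>N. (f z \<bullet> g z') * H z z' x)" if x: "x \<in> \<Omega> - NN" for x
  proof -
    obtain V where V: "V \<in> Tv" "x \<in> interior (convex hull V)" using notNN closure_subset x by blast
    have "(\<Sum>j\<in>Basis. frechet_derivative f (at x) j \<bullet> frechet_derivative g (at x) j)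
       = (\<Sum>j\<in>Basis. (\<Sum>z\<in>N. D z x j *\<^sub>R f z) \<bullet> (\<Sum>z'\<in>N. D z' x j *\<^sub>R g z'))"
      unfolding S1_fderiv[OF f V] S1_fderiv[OF g V] D_def by simp
    also have "\<dots> = (\<Sum>j\<in>Basis. \<Sum>z'\<in>N. \<Sum>z\<in>N. (f z \<bullet> g z') * (D z x j * D z' x j))"
      by (simp add: inner_sum_left inner_sum_right sum_distrib_left mult_ac)
    also have "\<dots> = (\<Sum>j\<in>Basis. \<Sum>z\<in>N. \<Sum>z'\<in>N. (f z \<bullet> g z') * (D z x j * D z' x j))"
      by (rule sum.cong[OF refl], rule sum.swap)
    also have "\<dots> = (\<Sum>z\<in>N. \<Sum>j\<in>Basis. \<Sum>z'\<in>N. (f z \<bullet> g z') * (D z x j * D z' x j))"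
      by (rule sum.swap)
    also have "\<dots> = (\<Sum>z\<in>N. \<Sum>z'\<in>N. \<Sum>j\<in>Basis. (f z \<bullet> g z') * (D z x j * D z' x j))"
      by (rule sum.cong[OF refl], rule sum.swap)
    also have "\<dots> = (\<Sum>z\<in>N. \<Sum>z'\<in>N. (f z \<bullet> g z') * H z z' x)"
      unfolding H_def by (simp add: sum_distrib_left)
    finally show ?thesis .
  qed
  have "dprod \<Omega> f g = integral \<Omega> (\<lambda>x. \<Sum>z\<in>N. \<Sum>z'\<in>N. (f z \<bullet> g z') * H z z' x)"
    unfolding dprod_def by (rule integral_spike[OF negNN]) (use eq in auto)
  also have "\<dots> = (\<Sum>z\<in>N. integral \<Omega> (\<lambda>x. \<Sum>z'\<in>N. (f z \<bullet> g z') * H z z' x))"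
    by (rule integral_sum[OF finN]) (auto intro!: integrable_sum finN integrable_on_mult_right Hint)
  also have "\<dots> = (\<Sum>z\<in>N. \<Sum>z'\<in>N. integral \<Omega> (\<lambda>x. (f z \<bullet> g z') * H z z' x))"
    by (rule sum.cong[OF refl], rule integral_sum[OF finN]) (auto intro!: integrable_on_mult_right Hint)
  also have "\<dots> = (\<Sum>z\<in>N. \<Sum>z'\<in>N. (f z \<bullet> g z') * dprod \<Omega> (hat \<Omega> Tv z) (hat \<Omega> Tv z'))"
    by (simp add: dh Hint)
  finally show ?thesis .
qed

lemma cz_pos: assumes z: "z \<in> N" shows "cz z > 0"
proof -
  obtain V where V: "V \<in> Tv" "z \<in> V" using z by (auto simp: nodes_def)
  have cV: "card V = Suc DIM(real^'d)" using cardV[OF V(1)] by simp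
  have "interior (convex hull V) \<noteq> {}"
    using interior_convex_hull_eq_empty[OF cV] indV[OF V(1)] by simp
  moreover have "interior (convex hull V) \<subseteq> closure \<Omega>" using hull_sub[OF V(1)] interior_subset by blast
  ultimately have "interior (convex hull V) \<inter> \<Omega> \<noteq> {}"
    using open_Int_closure_eq_empty[of "interior (convex hull V)" \<Omega>] by auto
  then obtain x0 where x0: "x0 \<in> interior (convex hull V)" "x0 \<in> \<Omega>" by blast
  have "\<not> card V \<le> DIM(real^'d)" using cV by simp
  then have "interior (convex hull V) = {y. \<exists>u. (\<forall>x \<in> V. 0 < u x) \<and> sum u V = 1 \<and> (\<Sum>x\<in>V. u x *\<^sub>R x) = y}"
    using interior_convex_hull_explicit_minimal[OF indV[OF V(1)]] by simp
  then obtain u where u: "\<forall>v\<in>V. 0 < u v" "sum u V = 1" "(\<Sum>v\<in>V. u v *\<^sub>R v) = x0"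
    using x0(1) by blast
  have "x0 \<in> convex hull V" using x0(1) interior_subset by blast
  then have "hat \<Omega> Tv z x0 = hv V z x0"
    using hatg_on[OF V(1), of x0 z] unfolding hat_eq by simp
  also have "\<dots> = (\<Sum>v\<in>V. u v *\<^sub>R (fst (lb V z) v + snd (lb V z)))"
    unfolding hv_def using affine_convex_comb[OF finV[OF V(1)] u(2), of "fst (lb V z)" "snd (lb V z)"] lb[OF V(1)] u(3)
    by simp
  also have "\<dots> = (\<Sum>v\<in>V. if v = z then u v else 0)"
    by (rule sum.cong[OF refl]) (use lb[OF V(1)] in auto)
  also have "\<dots> = u z" using V finV by simp
  finally have pos: "hat \<Omega> Tv z x0 > 0" using u(1) V(2) by simp
  define p where "p = hat \<Omega> Tv z x0"
  have "continuous_on \<Omega> (hat \<Omega> Tv z)"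
    by (rule continuous_on_subset[OF S1D(1)[OF hat_S1] closure_subset])
  then have "continuous (at x0) (hat \<Omega> Tv z)"
    using continuous_on_eq_continuous_at[OF opn] x0(2) by blast
  then have "\<forall>e>0. \<exists>d>0. \<forall>y. dist y x0 < d \<longrightarrow> dist (hat \<Omega> Tv z y) p < e"
    unfolding continuous_at_eps_delta p_def .
  moreover have "p / 2 > 0" using pos p_def by simp
  ultimately obtain r1 where r1: "r1 > 0" "\<And>y. dist y x0 < r1 \<Longrightarrow> dist (hat \<Omega> Tv z y) p < p / 2"
    by blast
  obtain r2 where r2: "r2 > 0" "ball x0 r2 \<subseteq> \<Omega>" using opn x0(2) openE by blast
  define r where "r = min r1 r2"
  have r: "r > 0" "ball x0 r \<subseteq> \<Omega>" using r1 r2 by (auto simp: r_def)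
  have lb2: "hat \<Omega> Tv z y \<ge> p / 2" if "y \<in> ball x0 r" for y
  proof -
    have "dist y x0 < r1" using that by (auto simp: r_def dist_commute)
    then have "dist (hat \<Omega> Tv z y) p < p / 2" by (rule r1(2))
    then have "\<bar>hat \<Omega> Tv z y - p\<bar> < p / 2" by (simp add: dist_real_def)
    then show ?thesis by linarith
  qed
  have bl: "ball x0 r \<in> lmeasurable" by simp
  have ii: "(\<lambda>x. if x \<in> ball x0 r then p / 2 else 0) integrable_on \<Omega>"
    unfolding integrable_restrict_Int by (rule integrable_on_const) (use bl r in \<open>simp add: Int_absorb2\<close>)
  have "integral \<Omega> (\<lambda>x. if x \<in> ball x0 r then p / 2 else 0) = integral (ball x0 r) (\<lambda>x. p / 2)"
    unfolding integral_restrict_Int using r(2) by (simp add: Int_absorb2)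
  also have "\<dots> = p / 2 * measure lebesgue (ball x0 r)"
    using lmeasure_integral[OF bl] integral_mult[OF integrable_on_const[OF bl, of "1::real"], of "p/2"]
    by simp
  also have "\<dots> > 0"
  proof -
    have "\<not> negligible (ball x0 r)" using open_not_negligible[of "ball x0 r"] r(1) by simp
    then have "measure lebesgue (ball x0 r) \<noteq> 0" using negligible_iff_measure0[OF bl] by simp
    moreover have "measure lebesgue (ball x0 r) \<ge> 0" by simp
    ultimately show ?thesis using pos p_def by simp
  qed
  finally have "0 < integral \<Omega> (\<lambda>x. if x \<in> ball x0 r then p / 2 else 0)" .
  also have "\<dots> \<le> integral \<Omega> (hat \<Omega> Tv z)"
  proof (rule integral_le[OF ii hat_int])
    fix x assume "x \<in> \<Omega>"
    then have "x \<in> closure \<Omega>" using closure_subset by blast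
    then show "(if x \<in> ball x0 r then p / 2 else 0) \<le> hat \<Omega> Tv z x"
      using lb2[of x] hat_nonneg[of x z] by auto
  qed
  finally show ?thesis unfolding cz_def .
qed

end



lemma triple_swap: "cross3 a b \<bullet> c = - (cross3 a c \<bullet> b)"
  by (simp add: cross3_simps)

lemma triple_self: "cross3 a b \<bullet> b = 0"
  by (simp add: dot_cross_self)

context fem begin

abbreviation "A z z' \<equiv> dprod \<Omega> (hat \<Omega> Tv z) (hat \<Omega> Tv z')"

lemma dprod_sym: "dprod \<Omega> f g = dprod \<Omega> g f"
  unfolding dprod_def by (simp add: inner_commute)

lemma lprod_sym: "lprod \<Omega> Tv f g = lprod \<Omega> Tv g f"
  unfolding lprod_nodal by (simp add: inner_commute)

lemma lprod_add_left: "lprod \<Omega> Tv (\<lambda>x. f x + g x) h = lprod \<Omega> Tv f h + lprod \<Omega> Tv g h"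
  unfolding lprod_nodal by (simp add: inner_add_left distrib_left sum.distrib)

lemma lprod_diff_left: "lprod \<Omega> Tv (\<lambda>x. f x - g x) h = lprod \<Omega> Tv f h - lprod \<Omega> Tv g h"
  unfolding lprod_nodal by (simp add: inner_diff_left right_diff_distrib sum_subtractf)

lemma lprod_scale_left: "lprod \<Omega> Tv (\<lambda>x. c *\<^sub>R f x) h = c * lprod \<Omega> Tv f h"
  unfolding lprod_nodal by (simp add: sum_distrib_left mult_ac)

lemma lprod_add_right: "lprod \<Omega> Tv h (\<lambda>x. f x + g x) = lprod \<Omega> Tv h f + lprod \<Omega> Tv h g"
  unfolding lprod_sym[of h "\<lambda>x. f x + g x"] lprod_add_left lprod_sym[of f h] lprod_sym[of g h] ..

lemma lprod_diff_right: "lprod \<Omega> Tv h (\<lambda>x. f x - g x) = lprod \<Omega> Tv h f - lprod \<Omega> Tv h g"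
  unfolding lprod_sym[of h "\<lambda>x. f x - g x"] lprod_diff_left lprod_sym[of f h] lprod_sym[of g h] ..

lemma lprod_scale_right: "lprod \<Omega> Tv h (\<lambda>x. c *\<^sub>R f x) = c * lprod \<Omega> Tv h f"
  unfolding lprod_sym[of h "\<lambda>x. c *\<^sub>R f x"] lprod_scale_left lprod_sym[of f h] ..

lemma lprod_cross_swap: "lprod \<Omega> Tv (fcross a b) c = - lprod \<Omega> Tv (fcross a c) b"
proof -
  have "(\<Sum>z\<in>N. cz z * (cross3 (a z) (b z) \<bullet> c z)) = (\<Sum>z\<in>N. - (cz z * (cross3 (a z) (c z) \<bullet> b z)))"
    by (rule sum.cong[OF refl]) (metis triple_swap mult_minus_right)
  then show ?thesis unfolding lprod_nodal fcross_def by (simp add: sum_negf)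
qed

lemma lprod_cross_self: "lprod \<Omega> Tv (fcross a b) b = 0"
  unfolding lprod_nodal fcross_def by (simp add: triple_self)

lemma lprod_cong: "(\<And>z. z \<in> N \<Longrightarrow> f z = f' z) \<Longrightarrow> (\<And>z. z \<in> N \<Longrightarrow> g z = g' z) \<Longrightarrow>
   lprod \<Omega> Tv f g = lprod \<Omega> Tv f' g'"
  unfolding lprod_nodal by (rule sum.cong) auto

lemma dprod_add_left:
  fixes f g h :: "real^'d \<Rightarrow> 'b::real_inner"
  assumes "f \<in> S1 \<Omega> Tv" "g \<in> S1 \<Omega> Tv" "h \<in> S1 \<Omega> Tv"
  shows "dprod \<Omega> (\<lambda>x. f x + g x) h = dprod \<Omega> f h + dprod \<Omega> g h"
  unfolding dprod_S1[OF S1_add[OF assms(1,2)] assms(3)] dprod_S1[OF assms(1,3)] dprod_S1[OF assms(2,3)]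
  by (simp add: inner_add_left distrib_right sum.distrib)

lemma dprod_scale_left:
  fixes f h :: "real^'d \<Rightarrow> 'b::real_inner"
  assumes "f \<in> S1 \<Omega> Tv" "h \<in> S1 \<Omega> Tv"
  shows "dprod \<Omega> (\<lambda>x. c *\<^sub>R f x) h = c * dprod \<Omega> f h"
  unfolding dprod_S1[OF S1_scale[OF assms(1)] assms(2)] dprod_S1[OF assms(1,2)]
  by (simp add: sum_distrib_left mult_ac)

lemma dprod_diff_left:
  fixes f g h :: "real^'d \<Rightarrow> 'b::real_inner"
  assumes "f \<in> S1 \<Omega> Tv" "g \<in> S1 \<Omega> Tv" "h \<in> S1 \<Omega> Tv"
  shows "dprod \<Omega> (\<lambda>x. f x - g x) h = dprod \<Omega> f h - dprod \<Omega> g h"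
  unfolding dprod_S1[OF S1_diff[OF assms(1,2)] assms(3)] dprod_S1[OF assms(1,3)] dprod_S1[OF assms(2,3)]
  by (simp add: inner_diff_left left_diff_distrib sum_subtractf)

lemma dprod_add_right:
  fixes f g h :: "real^'d \<Rightarrow> 'b::real_inner"
  assumes "f \<in> S1 \<Omega> Tv" "g \<in> S1 \<Omega> Tv" "h \<in> S1 \<Omega> Tv"
  shows "dprod \<Omega> h (\<lambda>x. f x + g x) = dprod \<Omega> h f + dprod \<Omega> h g"
  unfolding dprod_sym[of h "\<lambda>x. f x + g x"] dprod_add_left[OF assms] dprod_sym[of f h] dprod_sym[of g h] ..

lemma dprod_scale_right:
  fixes f h :: "real^'d \<Rightarrow> 'b::real_inner"
  assumes "f \<in> S1 \<Omega> Tv" "h \<in> S1 \<Omega> Tv"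
  shows "dprod \<Omega> h (\<lambda>x. c *\<^sub>R f x) = c * dprod \<Omega> h f"
  unfolding dprod_sym[of h "\<lambda>x. c *\<^sub>R f x"] dprod_scale_left[OF assms] dprod_sym[of f h] ..

lemma dprod_diff_right:
  fixes f g h :: "real^'d \<Rightarrow> 'b::real_inner"
  assumes "f \<in> S1 \<Omega> Tv" "g \<in> S1 \<Omega> Tv" "h \<in> S1 \<Omega> Tv"
  shows "dprod \<Omega> h (\<lambda>x. f x - g x) = dprod \<Omega> h f - dprod \<Omega> h g"
  unfolding dprod_sym[of h "\<lambda>x. f x - g x"] dprod_diff_left[OF assms] dprod_sym[of f h] dprod_sym[of g h] ..

lemma Ph_ex:
  fixes m :: "real^'d \<Rightarrow> real^3"
  assumes m: "m \<in> S1 \<Omega> Tv"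
  shows "\<exists>p. p \<in> S1 \<Omega> Tv \<and> (\<forall>\<phi>\<in>S1 \<Omega> Tv. lprod \<Omega> Tv p \<phi> = - dprod \<Omega> m \<phi>)"
proof -
  define G where "G z' = (\<Sum>z\<in>N. A z z' *\<^sub>R m z)" for z'
  define p where "p = interp \<Omega> Tv (\<lambda>z'. (- (1 / cz z')) *\<^sub>R G z')"
  have "lprod \<Omega> Tv p \<phi> = - dprod \<Omega> m \<phi>" if \<phi>: "\<phi> \<in> S1 \<Omega> Tv" for \<phi>
  proof -
    have "lprod \<Omega> Tv p \<phi> = (\<Sum>z'\<in>N. cz z' * ((- (1 / cz z')) *\<^sub>R G z' \<bullet> \<phi> z'))"
      unfolding lprod_nodal p_def by (rule sum.cong) (auto simp: interp_node)
    also have "\<dots> = (\<Sum>z'\<in>N. - (G z' \<bullet> \<phi> z'))"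
    proof (rule sum.cong[OF refl])
      fix z' assume "z' \<in> N"
      then have "cz z' \<noteq> 0" using cz_pos[of z'] by simp
      then show "cz z' * ((- (1 / cz z')) *\<^sub>R G z' \<bullet> \<phi> z') = - (G z' \<bullet> \<phi> z')"
        by (simp add: field_simps)
    qed
    also have "\<dots> = - (\<Sum>z'\<in>N. \<Sum>z\<in>N. (m z \<bullet> \<phi> z') * A z z')"
      unfolding G_def by (simp add: inner_sum_left sum_negf mult_ac)
    also have "\<dots> = - dprod \<Omega> m \<phi>"
      unfolding dprod_S1[OF m \<phi>] by (subst sum.swap) simp
    finally show ?thesis .
  qed
  moreover have "p \<in> S1 \<Omega> Tv" unfolding p_def by (rule interp_S1)
  ultimately show ?thesis by blast
qed

lemma Ph_uniq:
  fixes m p1 p2 :: "real^'d \<Rightarrow> real^3"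
  assumes p1: "p1 \<in> S1 \<Omega> Tv" "\<forall>\<phi>\<in>S1 \<Omega> Tv. lprod \<Omega> Tv p1 \<phi> = - dprod \<Omega> m \<phi>"
    and p2: "p2 \<in> S1 \<Omega> Tv" "\<forall>\<phi>\<in>S1 \<Omega> Tv. lprod \<Omega> Tv p2 \<phi> = - dprod \<Omega> m \<phi>"
  shows "p1 = p2"
proof -
  define d where "d = (\<lambda>x. p1 x - p2 x)"
  have d: "d \<in> S1 \<Omega> Tv" unfolding d_def by (rule S1_diff[OF p1(1) p2(1)])
  have "lprod \<Omega> Tv d d = lprod \<Omega> Tv p1 d - lprod \<Omega> Tv p2 d"
    unfolding d_def by (rule lprod_diff_left)
  also have "\<dots> = 0" using p1(2) p2(2) d by simp
  finally have s0: "(\<Sum>z\<in>N. cz z * (d z \<bullet> d z)) = 0" unfolding lprod_nodal .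
  have nn: "\<And>z. z \<in> N \<Longrightarrow> 0 \<le> cz z * (d z \<bullet> d z)"
    by (rule mult_nonneg_nonneg[OF cz_nonneg inner_ge_zero])
  have z0: "cz z * (d z \<bullet> d z) = 0" if z: "z \<in> N" for z
    using sum_nonneg_eq_0_iff[OF finN, of "\<lambda>z. cz z * (d z \<bullet> d z)"] nn s0 z by blast
  have dz: "d z = 0" if z: "z \<in> N" for z
  proof -
    have "cz z \<noteq> 0" using cz_pos[OF z] by simp
    then show ?thesis using z0[OF z] by simp
  qed
  show ?thesis
  proof (rule S1_unique[OF p1(1) p2(1)])
    fix z assume "z \<in> N"
    then have "p1 z - p2 z = 0" using dz[of z] unfolding d_def by simp
    then show "p1 z = p2 z" by simp
  qed
qed

lemma Ph:
  fixes m :: "real^'d \<Rightarrow> real^3"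
  assumes m: "m \<in> S1 \<Omega> Tv"
  shows "Ph_heff \<Omega> Tv m \<in> S1 \<Omega> Tv" "\<And>\<phi>. \<phi> \<in> S1 \<Omega> Tv \<Longrightarrow> lprod \<Omega> Tv (Ph_heff \<Omega> Tv m) \<phi> = - dprod \<Omega> m \<phi>"
proof -
  have "\<exists>!p. p \<in> S1 \<Omega> Tv \<and> (\<forall>\<phi>\<in>S1 \<Omega> Tv. lprod \<Omega> Tv p \<phi> = - dprod \<Omega> m \<phi>)"
  proof -
    obtain p where p: "p \<in> S1 \<Omega> Tv" "\<forall>\<phi>\<in>S1 \<Omega> Tv. lprod \<Omega> Tv p \<phi> = - dprod \<Omega> m \<phi>"
      using Ph_ex[OF m] by blast
    show ?thesis
    proof (rule ex1I[of _ p])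
      show "p \<in> S1 \<Omega> Tv \<and> (\<forall>\<phi>\<in>S1 \<Omega> Tv. lprod \<Omega> Tv p \<phi> = - dprod \<Omega> m \<phi>)" using p by blast
      fix q assume "q \<in> S1 \<Omega> Tv \<and> (\<forall>\<phi>\<in>S1 \<Omega> Tv. lprod \<Omega> Tv q \<phi> = - dprod \<Omega> m \<phi>)"
      then show "q = p" using Ph_uniq[of q m p] p by blast
    qed
  qed
  then have "Ph_heff \<Omega> Tv m \<in> S1 \<Omega> Tv \<and> (\<forall>\<phi>\<in>S1 \<Omega> Tv. lprod \<Omega> Tv (Ph_heff \<Omega> Tv m) \<phi> = - dprod \<Omega> m \<phi>)"
    unfolding Ph_heff_def by (rule theI')
  then show "Ph_heff \<Omega> Tv m \<in> S1 \<Omega> Tv" "\<And>\<phi>. \<phi> \<in> S1 \<Omega> Tv \<Longrightarrow> lprod \<Omega> Tv (Ph_heff \<Omega> Tv m) \<phi> = - dprod \<Omega> m \<phi>"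
    by auto
qed

end



context fem begin

lemma lp_dt_mid:
  assumes k: "k \<noteq> 0"
  shows "lprod \<Omega> Tv (dt k a b) (mid a b) = (lprod \<Omega> Tv a a - lprod \<Omega> Tv b b) / (2 * k)"
proof -
  have pw: "((1 / k) *\<^sub>R (a z - b z)) \<bullet> ((1 / 2) *\<^sub>R (a z + b z)) = (a z \<bullet> a z - b z \<bullet> b z) / (2 * k)" for z
    using k by (simp add: inner_diff_left inner_add_right inner_commute[of "b z" "a z"] field_simps)
  have "lprod \<Omega> Tv (dt k a b) (mid a b) = (\<Sum>z\<in>N. (cz z * (a z \<bullet> a z) - cz z * (b z \<bullet> b z)) / (2 * k))"
    unfolding lprod_nodal dt_def mid_def pw by (simp add: right_diff_distrib)
  also have "\<dots> = (lprod \<Omega> Tv a a - lprod \<Omega> Tv b b) / (2 * k)"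
    unfolding lprod_nodal by (simp add: sum_divide_distrib[symmetric] sum_subtractf)
  finally show ?thesis .
qed

lemma dp_mid_dt:
  fixes a b :: "real^'d \<Rightarrow> real^3"
  assumes a: "a \<in> S1 \<Omega> Tv" and b: "b \<in> S1 \<Omega> Tv" and k: "k \<noteq> 0"
  shows "dprod \<Omega> (mid a b) (dt k a b) = (dprod \<Omega> a a - dprod \<Omega> b b) / (2 * k)"
proof -
  have s: "(\<lambda>x. a x + b x) \<in> S1 \<Omega> Tv" by (rule S1_add[OF a b])
  have d: "(\<lambda>x. a x - b x) \<in> S1 \<Omega> Tv" by (rule S1_diff[OF a b])
  have "dprod \<Omega> (mid a b) (dt k a b) = (1/2) * dprod \<Omega> (\<lambda>x. a x + b x) (dt k a b)"
    unfolding mid_def by (rule dprod_scale_left[OF s]) (unfold dt_def, rule S1_scale[OF d])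
  also have "dprod \<Omega> (\<lambda>x. a x + b x) (dt k a b) = (1/k) * dprod \<Omega> (\<lambda>x. a x + b x) (\<lambda>x. a x - b x)"
    unfolding dt_def by (rule dprod_scale_right[OF d s])
  also have "dprod \<Omega> (\<lambda>x. a x + b x) (\<lambda>x. a x - b x) = dprod \<Omega> a (\<lambda>x. a x - b x) + dprod \<Omega> b (\<lambda>x. a x - b x)"
    by (rule dprod_add_left[OF a b d])
  also have "dprod \<Omega> a (\<lambda>x. a x - b x) = dprod \<Omega> a a - dprod \<Omega> a b"
    by (rule dprod_diff_right[OF a b a])
  also have "dprod \<Omega> b (\<lambda>x. a x - b x) = dprod \<Omega> b a - dprod \<Omega> b b"
    by (rule dprod_diff_right[OF a b b])
  also have "dprod \<Omega> b a = dprod \<Omega> a b" by (rule dprod_sym)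
  finally show ?thesis using k by (simp add: field_simps)
qed

lemma S1_mid: "a \<in> S1 \<Omega> Tv \<Longrightarrow> b \<in> S1 \<Omega> Tv \<Longrightarrow> mid a b \<in> S1 \<Omega> Tv"
  unfolding mid_def by (intro S1_scale S1_add)

lemma S1_dt: "a \<in> S1 \<Omega> Tv \<Longrightarrow> b \<in> S1 \<Omega> Tv \<Longrightarrow> dt k a b \<in> S1 \<Omega> Tv"
  unfolding dt_def by (intro S1_scale S1_diff)

lemma part2:
  fixes m w :: "nat \<Rightarrow> real^'d \<Rightarrow> real^3"
  assumes meth: "nonlinear_am_method \<Omega> Tv \<alpha> \<tau> k (Suc i) v0 m w" and k: "k > 0"
  shows "Jh \<Omega> Tv \<tau> (m (Suc i)) (w (Suc i)) + \<alpha> * k * (hnorm \<Omega> Tv (dt k (m (Suc i)) (m i)))\<^sup>2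
         = Jh \<Omega> Tv \<tau> (m i) (w i)"
proof -
  note M = meth[unfolded nonlinear_am_method_def]
  have mS: "m j \<in> S1 \<Omega> Tv" if "j \<le> Suc i" for j
  proof (cases j)
    case 0 then show ?thesis using M by (simp add: Mh_def)
  next
    case (Suc j') then show ?thesis using M that by (auto simp: Mh_def)
  qed
  have wS: "w j \<in> S1 \<Omega> Tv" if "j \<le> Suc i" for j
  proof (cases j)
    case 0 then show ?thesis using M by (simp add: interp_S1)
  next
    case (Suc j') then show ?thesis using M that by (auto simp: Kh_def)
  qed
  define M1 where "M1 = m (Suc i)"
  define M0 where "M0 = m i"
  define W1 where "W1 = w (Suc i)"
  define W0 where "W0 = w i"
  have S: "M1 \<in> S1 \<Omega> Tv" "M0 \<in> S1 \<Omega> Tv" "W1 \<in> S1 \<Omega> Tv" "W0 \<in> S1 \<Omega> Tv"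
    using mS wS by (auto simp: M1_def M0_def W1_def W0_def)
  have e1: "\<And>\<phi>. \<phi> \<in> S1 \<Omega> Tv \<Longrightarrow> lprod \<Omega> Tv (dt k M1 M0) \<phi> = - lprod \<Omega> Tv (fcross (mid M1 M0) (mid W1 W0)) \<phi>"
    using M by (auto simp: M1_def M0_def W1_def W0_def)
  have e2: "\<And>\<psi>. \<psi> \<in> S1 \<Omega> Tv \<Longrightarrow> \<tau> * lprod \<Omega> Tv (dt k W1 W0) \<psi>
            = lprod \<Omega> Tv (fcross (mid M1 M0) (Ph_heff \<Omega> Tv (mid M1 M0))) \<psi>
              - \<alpha> * lprod \<Omega> Tv (fcross (mid M1 M0) (dt k M1 M0)) \<psi>
              - lprod \<Omega> Tv (fcross (mid M1 M0) (mid W1 W0)) \<psi>"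
    using M by (auto simp: M1_def M0_def W1_def W0_def)
  define Mm where "Mm = mid M1 M0"
  define Wm where "Wm = mid W1 W0"
  define D where "D = dt k M1 M0"
  define P where "P = Ph_heff \<Omega> Tv Mm"
  define Phi where "Phi = (\<lambda>x. P x - \<alpha> *\<^sub>R D x)"
  have SMm: "Mm \<in> S1 \<Omega> Tv" unfolding Mm_def by (rule S1_mid[OF S(1,2)])
  have SWm: "Wm \<in> S1 \<Omega> Tv" unfolding Wm_def by (rule S1_mid[OF S(3,4)])
  have SD: "D \<in> S1 \<Omega> Tv" unfolding D_def by (rule S1_dt[OF S(1,2)])
  have SP: "P \<in> S1 \<Omega> Tv" unfolding P_def by (rule Ph(1)[OF SMm])
  have SPhi: "Phi \<in> S1 \<Omega> Tv" unfolding Phi_def by (rule S1_diff[OF SP S1_scale[OF SD]])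
  define X where "X = fcross Mm Wm"
  have E1: "lprod \<Omega> Tv D Phi = - lprod \<Omega> Tv X Phi"
    using e1[OF SPhi] by (simp add: D_def X_def Mm_def Wm_def)
  have E2: "\<tau> * lprod \<Omega> Tv (dt k W1 W0) Wm = lprod \<Omega> Tv (fcross Mm P) Wm - \<alpha> * lprod \<Omega> Tv (fcross Mm D) Wm
      - lprod \<Omega> Tv X Wm"
    using e2[OF SWm] by (simp add: D_def X_def Mm_def Wm_def P_def)
  have c1: "lprod \<Omega> Tv X Wm = 0" unfolding X_def by (rule lprod_cross_self)
  have c2: "lprod \<Omega> Tv (fcross Mm P) Wm = - lprod \<Omega> Tv X P" unfolding X_def by (rule lprod_cross_swap)
  have c3: "lprod \<Omega> Tv (fcross Mm D) Wm = - lprod \<Omega> Tv X D" unfolding X_def by (rule lprod_cross_swap)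
  have l1: "lprod \<Omega> Tv X Phi = lprod \<Omega> Tv X P - \<alpha> * lprod \<Omega> Tv X D"
    unfolding Phi_def lprod_diff_right lprod_scale_right ..
  have l2: "lprod \<Omega> Tv D Phi = lprod \<Omega> Tv D P - \<alpha> * lprod \<Omega> Tv D D"
    unfolding Phi_def lprod_diff_right lprod_scale_right ..
  have l3: "lprod \<Omega> Tv D P = - dprod \<Omega> Mm D"
    using Ph(2)[OF SMm SD] lprod_sym[of D P] by (simp add: P_def)
  have l4: "dprod \<Omega> Mm D = (dprod \<Omega> M1 M1 - dprod \<Omega> M0 M0) / (2 * k)"
    unfolding Mm_def D_def by (rule dp_mid_dt[OF S(1,2)]) (use k in simp)
  have l5: "lprod \<Omega> Tv (dt k W1 W0) Wm = (lprod \<Omega> Tv W1 W1 - lprod \<Omega> Tv W0 W0) / (2 * k)"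
    unfolding Wm_def by (rule lp_dt_mid) (use k in simp)
  have key: "\<tau> * ((lprod \<Omega> Tv W1 W1 - lprod \<Omega> Tv W0 W0) / (2 * k))
     = - ((dprod \<Omega> M1 M1 - dprod \<Omega> M0 M0) / (2 * k)) - \<alpha> * lprod \<Omega> Tv D D"
    using E1 E2 c1 c2 c3 l1 l2 l3 l4 l5 by (simp add: algebra_simps)
  then have key2: "\<tau> * (lprod \<Omega> Tv W1 W1 - lprod \<Omega> Tv W0 W0)
     = - (dprod \<Omega> M1 M1 - dprod \<Omega> M0 M0) - 2 * k * \<alpha> * lprod \<Omega> Tv D D"
    using k by (simp add: field_simps)
  show ?thesis
    unfolding Jh_def energy_def hnorm_sq
    using key2 by (simp add: M1_def M0_def W1_def W0_def D_def algebra_simps)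
qed

end



context fem begin

lemma part3:
  fixes m w :: "nat \<Rightarrow> real^'d \<Rightarrow> real^3" and u z :: "nat \<Rightarrow> nat \<Rightarrow> real^'d \<Rightarrow> real^3"
  assumes meth: "linearized_am_method \<Omega> Tv \<alpha> \<tau> k \<epsilon> (Suc i) v0 m w u z lfin" and k: "k > 0"
  shows "Jh \<Omega> Tv \<tau> (m (Suc i)) (w (Suc i)) + \<alpha> * k * (hnorm \<Omega> Tv (dt k (m (Suc i)) (m i)))\<^sup>2
         + k * lprod \<Omega> Tv (fcross (mid (m (Suc i)) (m i)) (residual z lfin i))
                (\<lambda>x. Ph_heff \<Omega> Tv (mid (m (Suc i)) (m i)) x - \<alpha> *\<^sub>R dt k (m (Suc i)) (m i) x)
         = Jh \<Omega> Tv \<tau> (m i) (w i)"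
proof -
  note M = meth[unfolded linearized_am_method_def]
  have step: "\<And>j. j < Suc i \<Longrightarrow> u j (Suc (lfin j)) \<in> S1 \<Omega> Tv \<and> z j (Suc (lfin j)) \<in> S1 \<Omega> Tv
      \<and> m (Suc j) = (\<lambda>x. 2 *\<^sub>R u j (Suc (lfin j)) x - m j x)
      \<and> w (Suc j) = (\<lambda>x. 2 *\<^sub>R z j (Suc (lfin j)) x - w j x)"
    using M by blast
  have mwS: "m j \<in> S1 \<Omega> Tv \<and> w j \<in> S1 \<Omega> Tv" if "j \<le> Suc i" for j
    using that
  proof (induction j)
    case 0 then show ?case using M by (simp add: Mh_def interp_S1)
  next
    case (Suc j)
    then have j: "j < Suc i" by simp
    have ih: "m j \<in> S1 \<Omega> Tv" "w j \<in> S1 \<Omega> Tv" using Suc by auto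
    show ?case using step[OF j] ih by (auto intro!: S1_diff S1_scale)
  qed
  define l where "l = lfin i"
  have ii: "i < Suc i" by simp
  have al: "\<forall>l'\<le>lfin i.
           u i (Suc l') \<in> S1 \<Omega> Tv \<and>
           (\<forall>\<phi>\<in>S1 \<Omega> Tv. 2 * lprod \<Omega> Tv (u i (Suc l')) \<phi>
               + k * lprod \<Omega> Tv (fcross (u i (Suc l')) (z i l')) \<phi> = 2 * lprod \<Omega> Tv (m i) \<phi>) \<and>
           z i (Suc l') \<in> S1 \<Omega> Tv \<and>
           (\<forall>\<psi>\<in>S1 \<Omega> Tv. 2 * \<tau> * lprod \<Omega> Tv (z i (Suc l')) \<psi>
               + k * lprod \<Omega> Tv (fcross (u i (Suc l')) (z i (Suc l'))) \<psi>
             = k * lprod \<Omega> Tv (fcross (u i (Suc l')) (Ph_heff \<Omega> Tv (u i (Suc l')))) \<psi>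
               + 2 * \<alpha> * lprod \<Omega> Tv (fcross (u i (Suc l')) (m i)) \<psi>
               + 2 * \<tau> * lprod \<Omega> Tv (w i) \<psi>)"
    using M ii by blast
  then have al: "u i (Suc l) \<in> S1 \<Omega> Tv \<and>
           (\<forall>\<phi>\<in>S1 \<Omega> Tv. 2 * lprod \<Omega> Tv (u i (Suc l)) \<phi>
               + k * lprod \<Omega> Tv (fcross (u i (Suc l)) (z i l)) \<phi> = 2 * lprod \<Omega> Tv (m i) \<phi>) \<and>
           z i (Suc l) \<in> S1 \<Omega> Tv \<and>
           (\<forall>\<psi>\<in>S1 \<Omega> Tv. 2 * \<tau> * lprod \<Omega> Tv (z i (Suc l)) \<psi>
               + k * lprod \<Omega> Tv (fcross (u i (Suc l)) (z i (Suc l))) \<psi>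
             = k * lprod \<Omega> Tv (fcross (u i (Suc l)) (Ph_heff \<Omega> Tv (u i (Suc l)))) \<psi>
               + 2 * \<alpha> * lprod \<Omega> Tv (fcross (u i (Suc l)) (m i)) \<psi>
               + 2 * \<tau> * lprod \<Omega> Tv (w i) \<psi>)"
    unfolding l_def by blast
  define U where "U = u i (Suc l)"
  define Z1 where "Z1 = z i (Suc l)"
  define Z0 where "Z0 = z i l"
  define M0 where "M0 = m i"
  define W0 where "W0 = w i"
  define M1 where "M1 = m (Suc i)"
  define W1 where "W1 = w (Suc i)"
  have SU: "U \<in> S1 \<Omega> Tv" and SZ1: "Z1 \<in> S1 \<Omega> Tv" using al by (auto simp: U_def Z1_def)
  have SM0: "M0 \<in> S1 \<Omega> Tv" and SW0: "W0 \<in> S1 \<Omega> Tv" using mwS[of i] by (auto simp: M0_def W0_def)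
  have M1e: "M1 = (\<lambda>x. 2 *\<^sub>R U x - M0 x)" and W1e: "W1 = (\<lambda>x. 2 *\<^sub>R Z1 x - W0 x)"
    using step[OF ii] by (auto simp: M1_def U_def l_def M0_def W1_def Z1_def W0_def)
  have SM1: "M1 \<in> S1 \<Omega> Tv" unfolding M1e by (intro S1_diff S1_scale SU SM0)
  have eq1: "\<And>\<phi>. \<phi> \<in> S1 \<Omega> Tv \<Longrightarrow> 2 * lprod \<Omega> Tv U \<phi> + k * lprod \<Omega> Tv (fcross U Z0) \<phi> = 2 * lprod \<Omega> Tv M0 \<phi>"
    using al by (simp add: U_def Z0_def M0_def)
  have eq2: "\<And>\<psi>. \<psi> \<in> S1 \<Omega> Tv \<Longrightarrow> 2 * \<tau> * lprod \<Omega> Tv Z1 \<psi> + k * lprod \<Omega> Tv (fcross U Z1) \<psi>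
             = k * lprod \<Omega> Tv (fcross U (Ph_heff \<Omega> Tv U)) \<psi> + 2 * \<alpha> * lprod \<Omega> Tv (fcross U M0) \<psi>
               + 2 * \<tau> * lprod \<Omega> Tv W0 \<psi>"
    using al by (simp add: U_def Z1_def M0_def W0_def)
  have midU: "mid M1 M0 = U" unfolding M1e mid_def by (rule ext) (simp add: algebra_simps)
  define R where "R = (\<lambda>x. Z1 x - Z0 x)"
  have Re: "residual z lfin i = R" unfolding residual_def R_def Z1_def Z0_def l_def ..
  define D where "D = dt k M1 M0"
  have SD: "D \<in> S1 \<Omega> Tv" unfolding D_def by (rule S1_dt[OF SM1 SM0])
  define P where "P = Ph_heff \<Omega> Tv U"
  have SP: "P \<in> S1 \<Omega> Tv" unfolding P_def by (rule Ph(1)[OF SU])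
  define Phi where "Phi = (\<lambda>x. P x - \<alpha> *\<^sub>R D x)"
  have SPhi: "Phi \<in> S1 \<Omega> Tv" unfolding Phi_def by (rule S1_diff[OF SP S1_scale[OF SD]])
  define Y where "Y = fcross U Z1"
  define Q where "Q = fcross U R"
  have kn: "k \<noteq> 0" using k by simp
  have a1: "lprod \<Omega> Tv D Phi = (1 / k) * (lprod \<Omega> Tv M1 Phi - lprod \<Omega> Tv M0 Phi)"
    unfolding D_def dt_def lprod_scale_left lprod_diff_left ..
  have a2: "lprod \<Omega> Tv M1 Phi = 2 * lprod \<Omega> Tv U Phi - lprod \<Omega> Tv M0 Phi"
    unfolding M1e lprod_scale_left lprod_diff_left ..
  have a3: "fcross U Z0 = (\<lambda>x. Y x - Q x)"
    unfolding Y_def Q_def fcross_def R_def by (rule ext) (simp add: Cross3.right_diff_distrib)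
  have a4: "lprod \<Omega> Tv (fcross U Z0) Phi = lprod \<Omega> Tv Y Phi - lprod \<Omega> Tv Q Phi"
    unfolding a3 lprod_diff_left ..
  have A1: "lprod \<Omega> Tv D Phi = - lprod \<Omega> Tv Y Phi + lprod \<Omega> Tv Q Phi"
  proof -
    have h: "k * lprod \<Omega> Tv D Phi = k * (- lprod \<Omega> Tv Y Phi + lprod \<Omega> Tv Q Phi)"
      using eq1[OF SPhi] a1 a2 a4 kn by (simp add: field_simps)
    show ?thesis using h kn by simp
  qed
  have b1: "lprod \<Omega> Tv Y Z1 = 0" unfolding Y_def by (rule lprod_cross_self)
  have b2: "lprod \<Omega> Tv (fcross U P) Z1 = - lprod \<Omega> Tv Y P" unfolding Y_def by (rule lprod_cross_swap)
  have b3: "fcross U M0 = (\<lambda>x. (- (k / 2)) *\<^sub>R fcross U D x)"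
  proof (rule ext)
    fix x
    have "D x = (1 / k) *\<^sub>R (2 *\<^sub>R U x - 2 *\<^sub>R M0 x)"
      unfolding D_def dt_def M1e by (metis (no_types) diff_diff_eq scaleR_2)
    then have "(k / 2) *\<^sub>R D x = U x - M0 x"
      using kn by (simp add: scaleR_diff_right)
    then have "M0 x = U x - (k / 2) *\<^sub>R D x" by simp
    then show "fcross U M0 x = (- (k / 2)) *\<^sub>R fcross U D x"
      unfolding fcross_def by (simp add: Cross3.right_diff_distrib cross_mult_right)
  qed
  have b4: "lprod \<Omega> Tv (fcross U M0) Z1 = (k / 2) * lprod \<Omega> Tv Y D"
    unfolding b3 lprod_scale_left Y_def using lprod_cross_swap[of U D Z1] by simp
  have b5: "lprod \<Omega> Tv W1 W1 = 4 * lprod \<Omega> Tv Z1 Z1 - 4 * lprod \<Omega> Tv W0 Z1 + lprod \<Omega> Tv W0 W0"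
    unfolding W1e lprod_diff_left lprod_diff_right lprod_scale_left lprod_scale_right
    using lprod_sym[of Z1 W0] by simp
  have B1: "\<tau> / 2 * (lprod \<Omega> Tv W1 W1 - lprod \<Omega> Tv W0 W0) = - k * lprod \<Omega> Tv Y Phi"
  proof -
    have "lprod \<Omega> Tv Y Phi = lprod \<Omega> Tv Y P - \<alpha> * lprod \<Omega> Tv Y D"
      unfolding Phi_def lprod_diff_right lprod_scale_right ..
    then have "- k * lprod \<Omega> Tv Y Phi = - k * (lprod \<Omega> Tv Y P - \<alpha> * lprod \<Omega> Tv Y D)" by simp
    then have yp: "- k * lprod \<Omega> Tv Y Phi = - k * lprod \<Omega> Tv Y P + \<alpha> * k * lprod \<Omega> Tv Y D"
      by (simp add: algebra_simps)
    have s1: "\<tau> / 2 * (lprod \<Omega> Tv W1 W1 - lprod \<Omega> Tv W0 W0) = 2 * \<tau> * (lprod \<Omega> Tv Z1 Z1 - lprod \<Omega> Tv W0 Z1)"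
      unfolding b5 by (simp add: algebra_simps)
    have e: "2 * \<tau> * lprod \<Omega> Tv Z1 Z1 + k * lprod \<Omega> Tv Y Z1
             = k * lprod \<Omega> Tv (fcross U P) Z1 + 2 * \<alpha> * lprod \<Omega> Tv (fcross U M0) Z1
               + 2 * \<tau> * lprod \<Omega> Tv W0 Z1"
      using eq2[OF SZ1] by (simp add: P_def Y_def)
    have s2: "2 * \<tau> * lprod \<Omega> Tv Z1 Z1 = - k * lprod \<Omega> Tv Y P + \<alpha> * k * lprod \<Omega> Tv Y D + 2 * \<tau> * lprod \<Omega> Tv W0 Z1"
      using e unfolding b1 b2 b4 by (simp add: algebra_simps)
    show ?thesis using s1 s2 yp by (simp add: algebra_simps)
  qed
  have c1: "lprod \<Omega> Tv D Phi = lprod \<Omega> Tv D P - \<alpha> * lprod \<Omega> Tv D D"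
    unfolding Phi_def lprod_diff_right lprod_scale_right ..
  have c2: "lprod \<Omega> Tv D P = - dprod \<Omega> U D"
    using Ph(2)[OF SU SD] lprod_sym[of D P] by (simp add: P_def)
  have c3: "dprod \<Omega> U D = (dprod \<Omega> M1 M1 - dprod \<Omega> M0 M0) / (2 * k)"
    unfolding midU[symmetric] D_def by (rule dp_mid_dt[OF SM1 SM0 kn])
  have fin: "\<tau> / 2 * (lprod \<Omega> Tv W1 W1 - lprod \<Omega> Tv W0 W0)
     = - (dprod \<Omega> M1 M1 - dprod \<Omega> M0 M0) / 2 - \<alpha> * k * lprod \<Omega> Tv D D - k * lprod \<Omega> Tv Q Phi"
  proof -
    have "- k * lprod \<Omega> Tv Y Phi = k * (lprod \<Omega> Tv D Phi - lprod \<Omega> Tv Q Phi)" using A1 by simp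
    also have "\<dots> = k * (- ((dprod \<Omega> M1 M1 - dprod \<Omega> M0 M0) / (2 * k)) - \<alpha> * lprod \<Omega> Tv D D - lprod \<Omega> Tv Q Phi)"
      using c1 c2 c3 by simp
    also have "\<dots> = - (dprod \<Omega> M1 M1 - dprod \<Omega> M0 M0) / 2 - \<alpha> * k * lprod \<Omega> Tv D D - k * lprod \<Omega> Tv Q Phi"
      using kn by (simp add: field_simps)
    finally show ?thesis using B1 by simp
  qed
  have goal_rw: "Ph_heff \<Omega> Tv (mid (m (Suc i)) (m i)) = P" using midU by (simp add: P_def M1_def M0_def)
  show ?thesis
    unfolding Jh_def energy_def hnorm_sq Re
    using fin midU
    by (simp add: M1_def[symmetric] M0_def[symmetric] W1_def[symmetric] W0_def[symmetric] D_def[symmetric]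
        P_def[symmetric] Q_def[symmetric] Phi_def[symmetric] algebra_simps)
qed

end



lemma normalize_le:
  fixes a b :: "'a::real_inner"
  assumes a: "norm a \<ge> 1" and b: "norm b \<ge> 1"
  shows "norm ((1 / norm a) *\<^sub>R a - (1 / norm b) *\<^sub>R b) \<le> norm (a - b)"
proof -
  define s where "s = norm a"
  define t where "t = norm b"
  define p where "p = a \<bullet> b"
  have s: "s \<ge> 1" and t: "t \<ge> 1" using a b by (auto simp: s_def t_def)
  have aa: "a \<bullet> a = s\<^sup>2" unfolding s_def by (simp add: power2_norm_eq_inner)
  have bb: "b \<bullet> b = t\<^sup>2" unfolding t_def by (simp add: power2_norm_eq_inner)
  have cs: "p \<le> s * t" unfolding p_def s_def t_def using norm_cauchy_schwarz by blast
  have l: "(norm ((1 / s) *\<^sub>R a - (1 / t) *\<^sub>R b))\<^sup>2 = (1/s)\<^sup>2 * (a \<bullet> a) + (1/t)\<^sup>2 * (b \<bullet> b) - 2 * (p / (s * t))"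
    unfolding power2_norm_eq_inner p_def
    by (simp add: inner_diff_left inner_diff_right inner_commute[of b a] power2_eq_square algebra_simps)
  also have "\<dots> = 2 - 2 * (p / (s * t))" using s t aa bb by (simp add: field_simps power2_eq_square)
  finally have l2: "(norm ((1 / s) *\<^sub>R a - (1 / t) *\<^sub>R b))\<^sup>2 = 2 - 2 * (p / (s * t))" .
  have r: "(norm (a - b))\<^sup>2 = s\<^sup>2 + t\<^sup>2 - 2 * p"
    unfolding power2_norm_eq_inner p_def using aa bb
    by (simp add: inner_diff_left inner_diff_right inner_commute[of b a])
  have st: "s * t \<ge> 1" using s t by (metis mult_mono' mult_1 zero_le_one order_trans)
  have id: "s\<^sup>2 + t\<^sup>2 - 2 * p - (2 - 2 * (p / (s * t))) = (s - t)\<^sup>2 + 2 * (s * t - p) * (1 - 1 / (s * t))"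
  proof -
    have sn: "s \<noteq> 0" and tn: "t \<noteq> 0" using s t by auto
    show ?thesis using sn tn by (simp add: field_simps power2_eq_square)
  qed
  have "(s - t)\<^sup>2 + 2 * (s * t - p) * (1 - 1 / (s * t)) \<ge> 0"
  proof -
    have "1 / (s * t) \<le> 1" using st by simp
    then have "2 * (s * t - p) * (1 - 1 / (s * t)) \<ge> 0" using cs by simp
    then show ?thesis by simp
  qed
  then have "(norm ((1 / s) *\<^sub>R a - (1 / t) *\<^sub>R b))\<^sup>2 \<le> (norm (a - b))\<^sup>2"
    using l2 r id by linarith
  then show ?thesis unfolding s_def t_def by (rule power2_le_imp_le) simp
qed

context fem begin

definition ONE :: "real^'d \<Rightarrow> real" where "ONE x = (if x \<in> closure \<Omega> then 1 else 0)"

lemma ONE_S1: "ONE \<in> S1 \<Omega> Tv"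
proof (rule S1I)
  show "continuous_on (closure \<Omega>) ONE"
    by (rule continuous_on_eq[of _ "\<lambda>x. 1"]) (auto simp: ONE_def)
  fix V assume V: "V \<in> Tv"
  show "\<exists>A b. linear A \<and> (\<forall>x\<in>convex hull V. ONE x = A x + b)"
    using hull_sub[OF V] by (intro exI[of _ "\<lambda>x. 0"] exI[of _ 1]) (auto simp: ONE_def linear_zero)
qed (auto simp: ONE_def)

lemma ONE_fderiv: assumes V: "V \<in> Tv" and x: "x \<in> interior (convex hull V)"
  shows "frechet_derivative ONE (at x) = (\<lambda>h. 0)"
proof -
  have "((\<lambda>y. 1::real) has_derivative (\<lambda>h. 0)) (at x)" by simp
  then have "(ONE has_derivative (\<lambda>h. 0)) (at x)"
  proof (rule has_derivative_transform_within_open[OF _ open_interior x])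
    fix y assume "y \<in> interior (convex hull V)"
    then have "y \<in> closure \<Omega>" using hull_sub[OF V] interior_subset by blast
    then show "1 = ONE y" by (simp add: ONE_def)
  qed
  then show ?thesis using frechet_derivative_at by metis
qed

lemma rowsum: "z \<in> N \<Longrightarrow> (\<Sum>z'\<in>N. A z z') = 0"
proof -
  assume z: "z \<in> N"
  have ONE1: "ONE z2 = 1" if z2: "z2 \<in> N" for z2
  proof -
    obtain V where V: "V \<in> Tv" "z2 \<in> V" using z2 unfolding nodes_def by blast
    have "z2 \<in> convex hull V" using V(2) by (rule hull_inc)
    then have "z2 \<in> closure \<Omega>" using hull_sub[OF V(1)] by blast
    then show ?thesis by (simp add: ONE_def)
  qed
  have z0: "dprod \<Omega> (hat \<Omega> Tv z) ONE = integral \<Omega> (\<lambda>x. 0::real)"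
    unfolding dprod_def
  proof (rule integral_spike[OF negNN])
    fix x assume x: "x \<in> \<Omega> - NN"
    then obtain V where V: "V \<in> Tv" "x \<in> interior (convex hull V)" using notNN closure_subset by blast
    show "0 = (\<Sum>j\<in>Basis. frechet_derivative (hat \<Omega> Tv z) (at x) j \<bullet> frechet_derivative ONE (at x) j)"
      unfolding ONE_fderiv[OF V] by simp
  qed
  have "(\<Sum>z2\<in>N. A z z2) = (\<Sum>z1\<in>N. if z1 = z then (\<Sum>z2\<in>N. A z1 z2) else 0)"
    using z by (simp add: sum.delta[OF finN])
  also have "\<dots> = (\<Sum>z1\<in>N. \<Sum>z2\<in>N. (hat \<Omega> Tv z z1 \<bullet> ONE z2) * A z1 z2)"
  proof (rule sum.cong[OF refl])
    fix z1 assume z1: "z1 \<in> N"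
    show "(if z1 = z then (\<Sum>z2\<in>N. A z1 z2) else 0) = (\<Sum>z2\<in>N. (hat \<Omega> Tv z z1 \<bullet> ONE z2) * A z1 z2)"
    proof (cases "z1 = z")
      case True
      then show ?thesis using hat_node[OF z1, of z] ONE1 by simp
    next
      case False
      then show ?thesis using hat_node[OF z1, of z] by simp
    qed
  qed
  also have "\<dots> = dprod \<Omega> (hat \<Omega> Tv z) ONE"
    by (rule dprod_S1[OF hat_S1 ONE_S1, symmetric])
  also have "\<dots> = 0" unfolding z0 by simp
  finally show ?thesis .
qed

lemma Asym: "A z z' = A z' z" by (rule dprod_sym)

lemma dprod_stiff:
  fixes f :: "real^'d \<Rightarrow> real^3"
  assumes f: "f \<in> S1 \<Omega> Tv"
  shows "dprod \<Omega> f f = - (1/2) * (\<Sum>z\<in>N. \<Sum>z'\<in>N. A z z' * (norm (f z - f z'))\<^sup>2)"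
proof -
  have e: "A z z' * (norm (f z - f z'))\<^sup>2 = A z z' * (f z \<bullet> f z) + A z z' * (f z' \<bullet> f z') - 2 * ((f z \<bullet> f z') * A z z')" for z z'
    by (simp add: power2_norm_eq_inner inner_diff_left inner_diff_right inner_commute[of "f z'" "f z"] algebra_simps)
  have t1: "(\<Sum>z\<in>N. \<Sum>z'\<in>N. A z z' * (f z \<bullet> f z)) = 0"
    by (simp add: sum_distrib_right[symmetric] rowsum)
  have t2: "(\<Sum>z\<in>N. \<Sum>z'\<in>N. A z z' * (f z' \<bullet> f z')) = 0"
  proof -
    have "(\<Sum>z\<in>N. \<Sum>z'\<in>N. A z z' * (f z' \<bullet> f z')) = (\<Sum>z'\<in>N. \<Sum>z\<in>N. A z' z * (f z' \<bullet> f z'))"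
      by (subst sum.swap) (simp add: Asym)
    also have "\<dots> = 0" by (simp add: sum_distrib_right[symmetric] rowsum)
    finally show ?thesis .
  qed
  have "(\<Sum>z\<in>N. \<Sum>z'\<in>N. A z z' * (norm (f z - f z'))\<^sup>2)
      = (\<Sum>z\<in>N. \<Sum>z'\<in>N. A z z' * (f z \<bullet> f z)) + (\<Sum>z\<in>N. \<Sum>z'\<in>N. A z z' * (f z' \<bullet> f z'))
        - 2 * (\<Sum>z\<in>N. \<Sum>z'\<in>N. (f z \<bullet> f z') * A z z')"
    unfolding e by (simp add: sum.distrib sum_subtractf sum_distrib_left)
  also have "\<dots> = - 2 * dprod \<Omega> f f" unfolding t1 t2 dprod_S1[OF f f] by simp
  finally show ?thesis by simp
qed

lemma dprod_mono:
  fixes f g :: "real^'d \<Rightarrow> real^3"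
  assumes f: "f \<in> S1 \<Omega> Tv" and g: "g \<in> S1 \<Omega> Tv"
    and ang: "\<forall>z\<in>N. \<forall>z'\<in>N. z \<noteq> z' \<longrightarrow> A z z' \<le> 0"
    and le: "\<And>z z'. z \<in> N \<Longrightarrow> z' \<in> N \<Longrightarrow> norm (g z - g z') \<le> norm (f z - f z')"
  shows "dprod \<Omega> g g \<le> dprod \<Omega> f f"
proof -
  have "(\<Sum>z\<in>N. \<Sum>z'\<in>N. A z z' * (norm (f z - f z'))\<^sup>2) \<le> (\<Sum>z\<in>N. \<Sum>z'\<in>N. A z z' * (norm (g z - g z'))\<^sup>2)"
  proof (intro sum_mono)
    fix z z' assume z: "z \<in> N" and z': "z' \<in> N"
    show "A z z' * (norm (f z - f z'))\<^sup>2 \<le> A z z' * (norm (g z - g z'))\<^sup>2"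
    proof (cases "z = z'")
      case True then show ?thesis by simp
    next
      case False
      then have a: "A z z' \<le> 0" using ang z z' by blast
      have "(norm (g z - g z'))\<^sup>2 \<le> (norm (f z - f z'))\<^sup>2"
        using le[OF z z'] by (simp add: power_mono)
      then show ?thesis using a by (simp add: mult_left_mono_neg)
    qed
  qed
  then show ?thesis unfolding dprod_stiff[OF f] dprod_stiff[OF g] by simp
qed

end



lemma norm_tangent_ge1:
  fixes a b :: "real^3"
  assumes "norm a = 1" "a \<bullet> b = 0"
  shows "norm (a + k *\<^sub>R b) \<ge> 1"
proof -
  have aa: "a \<bullet> a = 1" using assms(1) by (metis power2_norm_eq_inner power_one)
  have "(norm (a + k *\<^sub>R b))\<^sup>2 = 1 + k\<^sup>2 * (b \<bullet> b)"
    using assms(2) aa unfolding power2_norm_eq_inner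
    by (simp add: inner_add_left inner_add_right inner_commute[of b a] power2_eq_square algebra_simps)
  also have "\<dots> \<ge> 1" by simp
  finally have "1\<^sup>2 \<le> (norm (a + k *\<^sub>R b))\<^sup>2" by simp
  then show ?thesis by (rule power2_le_imp_le) simp
qed

context fem begin

lemma part1:
  fixes m v :: "nat \<Rightarrow> real^'d \<Rightarrow> real^3"
  assumes ang: "\<forall>z\<in>N. \<forall>z'\<in>N. z \<noteq> z' \<longrightarrow> dprod \<Omega> (hat \<Omega> Tv z) (hat \<Omega> Tv z') \<le> 0"
    and tps: "tangent_plane_scheme \<Omega> Tv \<alpha> \<tau> k (Suc i) m v" and k: "k > 0"
  shows "Jh \<Omega> Tv \<tau> (m (Suc i)) (v (Suc i)) + \<alpha> * k * (hnorm \<Omega> Tv (v (Suc i)))\<^sup>2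
         + \<tau> * k\<^sup>2 / 2 * (hnorm \<Omega> Tv (dt k (v (Suc i)) (v i)))\<^sup>2
         + k\<^sup>2 / 2 * dprod \<Omega> (v (Suc i)) (v (Suc i))
         \<le> Jh \<Omega> Tv \<tau> (m i) (v i)"
proof -
  note T = tps[unfolded tangent_plane_scheme_def]
  have step: "\<And>j. j < Suc i \<Longrightarrow> v (Suc j) \<in> Kh \<Omega> Tv (m j) \<and>
        (\<forall>\<phi>\<in>Kh \<Omega> Tv (m j).
            \<tau> * lprod \<Omega> Tv (dt k (v (Suc j)) (v j)) \<phi> + \<alpha> * lprod \<Omega> Tv (v (Suc j)) \<phi>
          + lprod \<Omega> Tv (fcross (m j) (v (Suc j))) \<phi>
          - k * lprod \<Omega> Tv (Ph_heff \<Omega> Tv (v (Suc j))) \<phi>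
          = lprod \<Omega> Tv (Ph_heff \<Omega> Tv (m j)) \<phi>) \<and>
        m (Suc j) = interp \<Omega> Tv (\<lambda>x. (1 / norm (m j x + k *\<^sub>R v (Suc j) x)) *\<^sub>R (m j x + k *\<^sub>R v (Suc j) x))"
    using T by blast
  have ge1: "norm (m j z + k *\<^sub>R v (Suc j) z) \<ge> 1"
    if "m j \<in> Mh \<Omega> Tv" "j < Suc i" "z \<in> N" for j z
  proof (rule norm_tangent_ge1)
    show "norm (m j z) = 1" using that by (auto simp: Mh_def)
    show "m j z \<bullet> v (Suc j) z = 0" using step[OF that(2)] that(3) by (auto simp: Kh_def)
  qed
  have mMh: "m j \<in> Mh \<Omega> Tv" if "j \<le> Suc i" for j
    using that
  proof (induction j)
    case 0 then show ?case using T by simp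
  next
    case (Suc j)
    then have j: "j < Suc i" and ih: "m j \<in> Mh \<Omega> Tv" by auto
    have e: "m (Suc j) = interp \<Omega> Tv (\<lambda>x. (1 / norm (m j x + k *\<^sub>R v (Suc j) x)) *\<^sub>R (m j x + k *\<^sub>R v (Suc j) x))"
      using step[OF j] by blast
    show ?case unfolding Mh_def
    proof (intro CollectI conjI ballI)
      show "m (Suc j) \<in> S1 \<Omega> Tv" unfolding e by (rule interp_S1)
      fix z assume z: "z \<in> N"
      have "m j z + k *\<^sub>R v (Suc j) z \<noteq> 0" using ge1[OF ih j z] by (metis norm_zero not_one_le_zero)
      then have "norm (m j z + k *\<^sub>R v (Suc j) z) \<noteq> 0" by simp
      then show "norm (m (Suc j) z) = 1" unfolding e interp_node[OF z] by simp
    qed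
  qed
  have vS: "v j \<in> S1 \<Omega> Tv" if "j \<le> Suc i" for j
  proof (cases j)
    case 0 then show ?thesis using T by (simp add: Kh_def)
  next
    case (Suc j') then show ?thesis using step[of j'] that by (auto simp: Kh_def)
  qed
  have ii: "i < Suc i" by simp
  define M0 where "M0 = m i"
  define M1 where "M1 = m (Suc i)"
  define V0 where "V0 = v i"
  define V1 where "V1 = v (Suc i)"
  define Uu where "Uu = (\<lambda>x. M0 x + k *\<^sub>R V1 x)"
  have SM0: "M0 \<in> S1 \<Omega> Tv" using mMh[of i] by (simp add: M0_def Mh_def)
  have SM1: "M1 \<in> S1 \<Omega> Tv" using mMh[of "Suc i"] by (simp add: M1_def Mh_def)
  have SV0: "V0 \<in> S1 \<Omega> Tv" using vS[of i] by (simp add: V0_def)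
  have SV1: "V1 \<in> S1 \<Omega> Tv" using vS[of "Suc i"] by (simp add: V1_def)
  have SkV1: "(\<lambda>x. k *\<^sub>R V1 x) \<in> S1 \<Omega> Tv" by (rule S1_scale[OF SV1])
  have SUu: "Uu \<in> S1 \<Omega> Tv" unfolding Uu_def by (rule S1_add[OF SM0 SkV1])
  have VK: "V1 \<in> Kh \<Omega> Tv M0" using step[OF ii] by (simp add: V1_def M0_def)
  have eq: "\<tau> * lprod \<Omega> Tv (dt k V1 V0) V1 + \<alpha> * lprod \<Omega> Tv V1 V1
          + lprod \<Omega> Tv (fcross M0 V1) V1
          - k * lprod \<Omega> Tv (Ph_heff \<Omega> Tv V1) V1
          = lprod \<Omega> Tv (Ph_heff \<Omega> Tv M0) V1"
    using step[OF ii] VK by (simp add: V1_def M0_def V0_def)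
  have f1: "lprod \<Omega> Tv (fcross M0 V1) V1 = 0" by (rule lprod_cross_self)
  have f2: "lprod \<Omega> Tv (Ph_heff \<Omega> Tv V1) V1 = - dprod \<Omega> V1 V1" by (rule Ph(2)[OF SV1 SV1])
  have f3: "lprod \<Omega> Tv (Ph_heff \<Omega> Tv M0) V1 = - dprod \<Omega> M0 V1" by (rule Ph(2)[OF SM0 SV1])
  have f4: "lprod \<Omega> Tv (dt k V1 V0) V1 = (1 / k) * (lprod \<Omega> Tv V1 V1 - lprod \<Omega> Tv V0 V1)"
    unfolding dt_def lprod_scale_left lprod_diff_left ..
  have f5: "(hnorm \<Omega> Tv (dt k V1 V0))\<^sup>2 = (1 / k)\<^sup>2 * (lprod \<Omega> Tv V1 V1 - 2 * lprod \<Omega> Tv V0 V1 + lprod \<Omega> Tv V0 V0)"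
    unfolding hnorm_sq dt_def lprod_scale_left lprod_scale_right lprod_diff_left lprod_diff_right
    using lprod_sym[of V1 V0] by (simp add: power2_eq_square algebra_simps)
  have f6: "dprod \<Omega> Uu Uu = dprod \<Omega> M0 M0 + 2 * k * dprod \<Omega> M0 V1 + k\<^sup>2 * dprod \<Omega> V1 V1"
  proof -
    have "dprod \<Omega> Uu Uu = dprod \<Omega> M0 Uu + dprod \<Omega> (\<lambda>x. k *\<^sub>R V1 x) Uu"
      unfolding Uu_def[of] by (rule dprod_add_left[OF SM0 SkV1 SUu[unfolded Uu_def]])
    also have "dprod \<Omega> M0 Uu = dprod \<Omega> M0 M0 + dprod \<Omega> M0 (\<lambda>x. k *\<^sub>R V1 x)"
      unfolding Uu_def by (rule dprod_add_right[OF SM0 SkV1 SM0])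
    also have "dprod \<Omega> M0 (\<lambda>x. k *\<^sub>R V1 x) = k * dprod \<Omega> M0 V1"
      by (rule dprod_scale_right[OF SV1 SM0])
    also have "dprod \<Omega> (\<lambda>x. k *\<^sub>R V1 x) Uu = k * dprod \<Omega> V1 Uu"
      by (rule dprod_scale_left[OF SV1 SUu])
    also have "dprod \<Omega> V1 Uu = dprod \<Omega> V1 M0 + dprod \<Omega> V1 (\<lambda>x. k *\<^sub>R V1 x)"
      unfolding Uu_def by (rule dprod_add_right[OF SM0 SkV1 SV1])
    also have "dprod \<Omega> V1 (\<lambda>x. k *\<^sub>R V1 x) = k * dprod \<Omega> V1 V1"
      by (rule dprod_scale_right[OF SV1 SV1])
    also have "dprod \<Omega> V1 M0 = dprod \<Omega> M0 V1" by (rule dprod_sym)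
    finally show ?thesis by (simp add: power2_eq_square algebra_simps)
  qed
  have f7: "dprod \<Omega> M1 M1 \<le> dprod \<Omega> Uu Uu"
  proof (rule dprod_mono[OF SUu SM1 ang])
    have M1z: "M1 z = (1 / norm (Uu z)) *\<^sub>R Uu z" if "z \<in> N" for z
      using step[OF ii] interp_node[OF that] by (simp add: M1_def Uu_def M0_def V1_def)
    have U1: "norm (Uu z) \<ge> 1" if "z \<in> N" for z
      using ge1[OF mMh[of i] ii that] by (simp add: Uu_def M0_def V1_def)
    fix z z' assume z: "z \<in> N" and z': "z' \<in> N"
    show "norm (M1 z - M1 z') \<le> norm (Uu z - Uu z')"
      unfolding M1z[OF z] M1z[OF z'] by (rule normalize_le[OF U1[OF z] U1[OF z']])
  qed
  have kn: "k \<noteq> 0" using k by simp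
  have eqk: "\<tau> * (lprod \<Omega> Tv V1 V1 - lprod \<Omega> Tv V0 V1) + \<alpha> * k * lprod \<Omega> Tv V1 V1 + k\<^sup>2 * dprod \<Omega> V1 V1
      = - k * dprod \<Omega> M0 V1"
  proof -
    have "\<tau> * ((1 / k) * (lprod \<Omega> Tv V1 V1 - lprod \<Omega> Tv V0 V1)) + \<alpha> * lprod \<Omega> Tv V1 V1 + k * dprod \<Omega> V1 V1
        = - dprod \<Omega> M0 V1"
      using eq f1 f2 f3 f4 by simp
    then have h0: "k * (\<tau> * ((1 / k) * (lprod \<Omega> Tv V1 V1 - lprod \<Omega> Tv V0 V1)) + \<alpha> * lprod \<Omega> Tv V1 V1 + k * dprod \<Omega> V1 V1)
        = k * (- dprod \<Omega> M0 V1)" by simp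
    have h2: "k * (\<tau> * ((1 / k) * (lprod \<Omega> Tv V1 V1 - lprod \<Omega> Tv V0 V1)) + \<alpha> * lprod \<Omega> Tv V1 V1 + k * dprod \<Omega> V1 V1)
       = \<tau> * (lprod \<Omega> Tv V1 V1 - lprod \<Omega> Tv V0 V1) + \<alpha> * k * lprod \<Omega> Tv V1 V1 + k\<^sup>2 * dprod \<Omega> V1 V1"
      using kn by (simp add: field_simps power2_eq_square)
    show ?thesis using h0 h2 by simp
  qed
  have hn: "\<tau> * k\<^sup>2 / 2 * (hnorm \<Omega> Tv (dt k V1 V0))\<^sup>2 = \<tau> / 2 * (lprod \<Omega> Tv V1 V1 - 2 * lprod \<Omega> Tv V0 V1 + lprod \<Omega> Tv V0 V0)"
    unfolding f5 using kn by (simp add: field_simps power2_eq_square)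
  show ?thesis
    unfolding Jh_def energy_def hnorm_sq[of V1] hnorm_sq[of V0]
      M1_def[symmetric] M0_def[symmetric] V1_def[symmetric] V0_def[symmetric] hn
    using f6 f7 eqk by (simp add: algebra_simps)
qed

end

theorem proposition3p6:
  fixes \<Omega> :: "(real^'d) set" and Tv :: "(real^'d) set set"
    and \<alpha> \<tau> k \<epsilon> :: real and i :: nat
  assumes dim: "CARD('d) = 2 \<or> CARD('d) = 3"
    and dom: "lipschitz_domain \<Omega>" and poly: "polytopal \<Omega>"
    and mesh: "simplicial_mesh \<Omega> Tv"
    and alpha: "\<alpha> > 0" and tau: "\<tau> > 0" and k: "k > 0"
  shows
   "(\<forall>(m::nat \<Rightarrow> real^'d \<Rightarrow> real^3) v.
       (\<forall>z\<in>nodes Tv. \<forall>z'\<in>nodes Tv. z \<noteq> z' \<longrightarrow> dprod \<Omega> (hat \<Omega> Tv z) (hat \<Omega> Tv z') \<le> 0) \<longrightarrow>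
       tangent_plane_scheme \<Omega> Tv \<alpha> \<tau> k (Suc i) m v \<longrightarrow>
         Jh \<Omega> Tv \<tau> (m (Suc i)) (v (Suc i)) + \<alpha> * k * (hnorm \<Omega> Tv (v (Suc i)))\<^sup>2
         + \<tau> * k\<^sup>2 / 2 * (hnorm \<Omega> Tv (dt k (v (Suc i)) (v i)))\<^sup>2
         + k\<^sup>2 / 2 * dprod \<Omega> (v (Suc i)) (v (Suc i))
         \<le> Jh \<Omega> Tv \<tau> (m i) (v i))
  \<and> (\<forall>v0 (m::nat \<Rightarrow> real^'d \<Rightarrow> real^3) w.
       nonlinear_am_method \<Omega> Tv \<alpha> \<tau> k (Suc i) v0 m w \<longrightarrow>
         Jh \<Omega> Tv \<tau> (m (Suc i)) (w (Suc i)) + \<alpha> * k * (hnorm \<Omega> Tv (dt k (m (Suc i)) (m i)))\<^sup>2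
         = Jh \<Omega> Tv \<tau> (m i) (w i))
  \<and> (\<forall>v0 (m::nat \<Rightarrow> real^'d \<Rightarrow> real^3) w u z lfin.
       linearized_am_method \<Omega> Tv \<alpha> \<tau> k \<epsilon> (Suc i) v0 m w u z lfin \<longrightarrow>
         Jh \<Omega> Tv \<tau> (m (Suc i)) (w (Suc i)) + \<alpha> * k * (hnorm \<Omega> Tv (dt k (m (Suc i)) (m i)))\<^sup>2
         + k * lprod \<Omega> Tv (fcross (mid (m (Suc i)) (m i)) (residual z lfin i))
                (\<lambda>x. Ph_heff \<Omega> Tv (mid (m (Suc i)) (m i)) x - \<alpha> *\<^sub>R dt k (m (Suc i)) (m i) x)
         = Jh \<Omega> Tv \<tau> (m i) (w i))"
proof -
  have opn: "open \<Omega>" and bdd: "bounded \<Omega>" using dom unfolding lipschitz_domain_def by auto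
  interpret F: fem \<Omega> Tv by unfold_locales (use mesh opn bdd in auto)
  show ?thesis
  proof (intro conjI allI impI)
    fix m v :: "nat \<Rightarrow> real^'d \<Rightarrow> real^3"
    assume ang: "\<forall>z\<in>nodes Tv. \<forall>z'\<in>nodes Tv. z \<noteq> z' \<longrightarrow> dprod \<Omega> (hat \<Omega> Tv z) (hat \<Omega> Tv z') \<le> 0"
      and tps: "tangent_plane_scheme \<Omega> Tv \<alpha> \<tau> k (Suc i) m v"
    show "Jh \<Omega> Tv \<tau> (m (Suc i)) (v (Suc i)) + \<alpha> * k * (hnorm \<Omega> Tv (v (Suc i)))\<^sup>2
         + \<tau> * k\<^sup>2 / 2 * (hnorm \<Omega> Tv (dt k (v (Suc i)) (v i)))\<^sup>2
         + k\<^sup>2 / 2 * dprod \<Omega> (v (Suc i)) (v (Suc i))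
         \<le> Jh \<Omega> Tv \<tau> (m i) (v i)"
      by (rule F.part1[OF ang tps k])
  next
    fix v0 and m w :: "nat \<Rightarrow> real^'d \<Rightarrow> real^3"
    assume "nonlinear_am_method \<Omega> Tv \<alpha> \<tau> k (Suc i) v0 m w"
    then show "Jh \<Omega> Tv \<tau> (m (Suc i)) (w (Suc i)) + \<alpha> * k * (hnorm \<Omega> Tv (dt k (m (Suc i)) (m i)))\<^sup>2
         = Jh \<Omega> Tv \<tau> (m i) (w i)"
      by (rule F.part2[OF _ k])
  next
    fix v0 and m w :: "nat \<Rightarrow> real^'d \<Rightarrow> real^3" and u z lfin
    assume "linearized_am_method \<Omega> Tv \<alpha> \<tau> k \<epsilon> (Suc i) v0 m w u z lfin"
    then show "Jh \<Omega> Tv \<tau> (m (Suc i)) (w (Suc i)) + \<alpha> * k * (hnorm \<Omega> Tv (dt k (m (Suc i)) (m i)))\<^sup>2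
         + k * lprod \<Omega> Tv (fcross (mid (m (Suc i)) (m i)) (residual z lfin i))
                (\<lambda>x. Ph_heff \<Omega> Tv (mid (m (Suc i)) (m i)) x - \<alpha> *\<^sub>R dt k (m (Suc i)) (m i) x)
         = Jh \<Omega> Tv \<tau> (m i) (w i)"
      by (rule F.part3[OF _ k])
  qed
qed

end
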